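(* Let $\nu\in\mathbb{C}$ with $\operatorname{Re}\nu>-\tfrac12$ and let $a,b,x>0$. Then $$J_{\nu}(ax)J_{\nu}(bx)=\frac{2}{\pi\,\Gamma(2\nu+1)}(abx^2)^{\nu}\int_0^1(1-t^2)^{\nu-\frac12}\cos\!\left(xt\sqrt{a^2+b^2}\right)\,{}_0F_3\!\left(;\nu+1,\tfrac{\nu}{2}+\tfrac14,\tfrac{\nu}{2}+\tfrac34;\tfrac{1}{64}a^2b^2x^4(1-t^2)^2\right)dt .$$
   Context: $J_\nu$ is the Bessel function of the first kind. ${}_0F_3(;b_1,b_2,b_3;w)=\sum_{k\ge0}\frac{w^k}{(b_1)_k(b_2)_k(b_3)_k\,k!}$ with $(c)_k$ the Pochhammer symbol. *)

theory Defs
  imports "HOL-Analysis.Analysis"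
begin

definition besselJ :: "complex \<Rightarrow> complex \<Rightarrow> complex" where
  "besselJ \<nu> z = (\<Sum>k. (-1) ^ k * (z / 2) powr (2 * of_nat k + \<nu>)
                       / (fact k * Gamma (of_nat k + \<nu> + 1)))"

definition hyp0F3 :: "complex \<Rightarrow> complex \<Rightarrow> complex \<Rightarrow> complex \<Rightarrow> complex" where
  "hyp0F3 b1 b2 b3 w = (\<Sum>k. w ^ k /
      (pochhammer b1 k * pochhammer b2 k * pochhammer b3 k * fact k))"

end

theory Submission
  imports Defs
begin


definition Kf :: "nat \<Rightarrow> complex \<Rightarrow> real \<Rightarrow> complex" where
  "Kf j w t = of_real t ^ (2*j) * of_real (1 - t^2) powr w"

lemma aux_set: "{0..1::real} \<subseteq> {z. 0 \<le> Re (1 - (complex_of_real z)\<^sup>2) \<or> Im (1 - (complex_of_real z)\<^sup>2) \<noteq> 0}"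
proof
  fix z :: real assume z: "z \<in> {0..1}"
  have e: "1 - (complex_of_real z)\<^sup>2 = of_real (1 - z^2)" by simp
  have "z^2 \<le> 1" using z by (auto intro: power_le_one)
  then show "z \<in> {z. 0 \<le> Re (1 - (complex_of_real z)\<^sup>2) \<or> Im (1 - (complex_of_real z)\<^sup>2) \<noteq> 0}"
    by (simp only: e Re_complex_of_real mem_Collect_eq) simp
qed

lemma Kf_cont: "Re w > 0 \<Longrightarrow> continuous_on {0..1} (Kf j w)"
  unfolding Kf_def
proof (intro continuous_intros)
  show "{0..1} \<subseteq> {z. 0 \<le> Re (complex_of_real (1 - z\<^sup>2)) \<or> Im (complex_of_real (1 - z\<^sup>2)) \<noteq> 0}"
    by (auto intro: power_le_one)
qed auto

lemma Kf_int: "Re w > 0 \<Longrightarrow> Kf j w integrable_on {0..1}"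
  by (rule integrable_continuous_interval) (rule Kf_cont)

lemma Kf_step:
  assumes "Re w > -1"
  shows "(Kf (Suc j) w has_integral
           (of_nat (2*j+1) / (2*(w+1)) * integral {0..1} (Kf j (w+1)))) {0..1}"
proof -
  define F where "F = (\<lambda>t::real. - ((1 - (of_real t)^2) powr (w+1)) / (2*(w+1)))"
  define F' where "F' = (\<lambda>t::real. of_real t * (1 - (of_real t)^2) powr w)"
  define G where "G = (\<lambda>t::real. (of_real t :: complex) ^ (2*j+1))"
  define G' where "G' = (\<lambda>t::real. of_nat (2*j+1) * (of_real t :: complex) ^ (2*j))"
  have w1: "w + 1 \<noteq> 0"
  proof
    assume "w + 1 = 0"
    then have "Re (w + 1) = 0" by simp
    with assms show False by simp
  qed
  define I where "I = integral {0..1} (Kf j (w+1))"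
  have hI: "(Kf j (w+1) has_integral I) {0..1}"
    using Kf_int[of "w+1" j] assms by (simp add: I_def integrable_integral)
  have "((\<lambda>t. F' t * G t) has_integral (of_nat (2*j+1) / (2*(w+1)) * I)) {0..1}"
  proof (rule integration_by_parts_interior[where prod = "(*)" and f = F and g = G and f' = F' and g' = G'])
    show "continuous_on {0..1} F" unfolding F_def
    proof (intro continuous_intros aux_set)
      show "0 < Re (w+1)" using assms by simp
      show "\<forall>t\<in>{0..1::real}. 2 * (w + 1) \<noteq> 0"
        using w1 by (intro ballI, simp only: mult_eq_0_iff, simp)
    qed
    show "continuous_on {0..1} G" unfolding G_def by (intro continuous_intros)
  next
    fix t :: real assume t: "t \<in> {0<..<1}"
    have nn: "1 - (complex_of_real t)\<^sup>2 \<notin> \<real>\<^sub>\<le>\<^sub>0"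
    proof -
      have "1 - t^2 > 0" using t by (simp add: abs_square_less_1)
      hence "1 - (complex_of_real t)\<^sup>2 = of_real (1 - t^2)" by simp
      with \<open>1 - t^2 > 0\<close> show ?thesis by (auto simp: complex_nonpos_Reals_iff)
    qed
    have d1: "((\<lambda>z. 1 - z^2) has_field_derivative (- (2 * of_real t))) (at (of_real t :: complex))"
      by (auto intro!: derivative_eq_intros)
    have d2: "((\<lambda>z. (1 - z^2) powr (w+1)) has_field_derivative
               ((w+1) * (1 - (of_real t)^2) powr (w+1-1) * (- (2 * of_real t)))) (at (of_real t :: complex))"
      by (rule DERIV_chain2[OF has_field_derivative_powr[OF nn, where s="w+1"] d1])
    have "((\<lambda>z. - ((1 - z^2) powr (w+1)) / (2*(w+1))) has_field_derivative
            F' t) (at (of_real t))"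
    proof -
      have "((\<lambda>z. - ((1 - z^2) powr (w+1)) / (2*(w+1))) has_field_derivative
            - ((w+1) * (1 - (of_real t)^2) powr (w+1-1) * (- (2 * of_real t))) / (2*(w+1))) (at (of_real t))"
        by (intro DERIV_cdivide DERIV_minus d2)
      also have "- ((w+1) * (1 - (of_real t)^2) powr (w+1-1) * (- (2 * of_real t))) / (2*(w+1)) = F' t"
      proof -
        have w2: "2*(w+1) \<noteq> 0" using w1 by (simp only: mult_eq_0_iff) simp
        have "- ((w+1) * (1 - (of_real t)^2) powr (w+1-1) * (- (2 * of_real t))) = (2*(w+1)) * F' t"
          by (simp add: F'_def algebra_simps)
        then show ?thesis using w2 by simp
      qed
      finally show ?thesis .
    qed
    then show "(F has_vector_derivative F' t) (at t)"
      unfolding F_def by (rule has_vector_derivative_real_field)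
    show "(G has_vector_derivative G' t) (at t)"
      unfolding G_def G'_def
    proof (rule has_vector_derivative_real_field)
      have "((\<lambda>z::complex. z ^ (2*j+1)) has_field_derivative of_nat (2*j+1) * (1 * (of_real t) ^ (2*j+1 - Suc 0))) (at (of_real t))"
        by (rule DERIV_power[OF DERIV_ident])
      then show "((\<lambda>z::complex. z ^ (2*j+1)) has_field_derivative of_nat (2*j+1) * (of_real t) ^ (2*j)) (at (of_real t))"
        by simp
    qed
  next
    have "((\<lambda>x. - (of_nat (2*j+1) / (2*(w+1))) * Kf j (w+1) x) has_integral
           - (of_nat (2*j+1) / (2*(w+1))) * I) {0..1}"
      by (intro has_integral_mult_right hI)
    moreover have "F 1 = 0" by (simp add: F_def)
    moreover have "G 0 = 0" by (simp add: G_def)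
    moreover have "(\<lambda>x. - (of_nat (2*j+1) / (2*(w+1))) * Kf j (w+1) x) = (\<lambda>x. F x * G' x)"
      by (auto simp: F_def G'_def Kf_def field_simps)
    ultimately show "((\<lambda>x. F x * G' x) has_integral
        (F 1 * G 1 - F 0 * G 0 - of_nat (2*j+1) / (2*(w+1)) * I)) {0..1}"
      by simp
  qed (rule bounded_bilinear_mult, simp)
  moreover have "(\<lambda>t. F' t * G t) = Kf (Suc j) w"
    by (auto simp: F'_def G_def Kf_def fun_eq_iff field_simps power_add power_mult_distrib)
  ultimately show ?thesis by (simp add: I_def)
qed




lemma Re_pos_not_nonpos_Int: "Re (z::complex) > 0 \<Longrightarrow> z \<notin> \<int>\<^sub>\<le>\<^sub>0"
proof
  assume "Re z > 0" "z \<in> \<int>\<^sub>\<le>\<^sub>0"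
  then obtain n where "z = of_int n" "n \<le> 0" by (auto elim!: nonpos_Ints_cases)
  with \<open>Re z > 0\<close> show False by simp
qed

lemma Re_pos_ne0: "Re (z::complex) > 0 \<Longrightarrow> z \<noteq> 0"
  by auto

definition Phi :: "complex \<Rightarrow> complex" where
  "Phi w = integral {0..1} (Kf 0 w)"

definition Tg :: "complex \<Rightarrow> complex" where
  "Tg w = of_real (sqrt pi) / 2 * Gamma (w + 1) / Gamma (w + 3/2)"

lemma Kf0_split:
  assumes "Re w > -1"
  shows "(Kf 0 w has_integral (Phi (w+1) + of_nat 1 / (2*(w+1)) * Phi (w+1))) {0..1}"
proof -
  have h1: "(Kf 0 (w+1) has_integral Phi (w+1)) {0..1}"
    unfolding Phi_def by (rule integrable_integral, rule Kf_int) (use assms in simp)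
  have h2: "(Kf 1 w has_integral (of_nat 1 / (2*(w+1)) * Phi (w+1))) {0..1}"
    using Kf_step[OF assms, of 0] by (simp add: Phi_def)
  have sum: "((\<lambda>t. Kf 0 (w+1) t + Kf 1 w t) has_integral (Phi (w+1) + of_nat 1 / (2*(w+1)) * Phi (w+1))) {0..1}"
    by (rule has_integral_add[OF h1 h2])
  have eq: "Kf 0 w t = Kf 0 (w+1) t + Kf 1 w t" if t: "t \<in> {0..1::real} - {1}" for t
  proof -
    have ne: "complex_of_real (1 - t^2) \<noteq> 0"
    proof -
      have "t < 1" "0 \<le> t" using t by auto
      then have "t^2 < 1" by (simp add: abs_square_less_1)
      then have "1 - t^2 \<noteq> 0" by simp
      then show ?thesis by (metis of_real_eq_0_iff)
    qed
    define P where "P = complex_of_real (1 - t^2) powr w"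
    have a: "Kf 0 (w+1) t = P * of_real (1 - t^2)" unfolding P_def Kf_def using ne by (simp add: powr_add)
    have b: "Kf 1 w t = of_real (t^2) * P" unfolding P_def Kf_def by simp
    have c: "Kf 0 w t = P" unfolding P_def Kf_def by simp
    show "Kf 0 w t = Kf 0 (w+1) t + Kf 1 w t" unfolding a b c by (simp add: algebra_simps)
  qed
  show ?thesis by (rule has_integral_spike_finite[where S="{1}", OF _ eq sum]) simp_all
qed

lemma Kf_int_all: "Re w > -1 \<Longrightarrow> Kf j w integrable_on {0..1}"
proof (cases j)
  case 0
  assume "Re w > -1"
  then show ?thesis using Kf0_split 0 by blast
next
  case (Suc i)
  assume "Re w > -1"
  then show ?thesis using Kf_step[of w i] Suc by blast
qed

lemma Phi_rec:
  assumes "Re w > -1"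
  shows "Phi w = Phi (w+1) * (2*w+3) / (2*w+2)"
proof -
  have w1: "w + 1 \<noteq> 0" "2*w+2 \<noteq> 0" using assms by (auto intro!: Re_pos_ne0)
  have "Phi w = Phi (w+1) + of_nat 1 / (2*(w+1)) * Phi (w+1)"
    unfolding Phi_def using Kf0_split[OF assms] by (simp add: Phi_def integral_unique)
  also have "\<dots> = Phi (w+1) * (2*w+3) / (2*w+2)"
    using w1 by (simp add: field_simps)
  finally show ?thesis .
qed

lemma Gamma_three_halves: "Gamma (3/2 :: complex) = of_real (sqrt pi) / 2"
proof -
  have "Gamma (1/2 + 1 :: complex) = 1/2 * Gamma (1/2)"
    by (rule Gamma_plus1) (rule Re_pos_not_nonpos_Int, simp)
  moreover have "(1/2 + 1 :: complex) = 3/2" by simp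
  ultimately show ?thesis by (simp add: Gamma_one_half_complex)
qed

lemma Tg_nonzero:
  assumes "Re w > -1" shows "Tg w \<noteq> 0"
proof -
  have a1: "w + 1 \<notin> \<int>\<^sub>\<le>\<^sub>0" by (rule Re_pos_not_nonpos_Int) (use assms in simp)
  have a2: "w + 3/2 \<notin> \<int>\<^sub>\<le>\<^sub>0" by (rule Re_pos_not_nonpos_Int) (use assms in simp)
  show ?thesis unfolding Tg_def using a1 a2 by (simp add: Gamma_eq_zero_iff)
qed

lemma Tg_rec:
  assumes "Re w > -1"
  shows "Tg w = Tg (w+1) * (2*w+3) / (2*w+2)"
proof -
  have a1: "w + 1 \<notin> \<int>\<^sub>\<le>\<^sub>0" by (rule Re_pos_not_nonpos_Int) (use assms in simp)
  have a2: "w + 3/2 \<notin> \<int>\<^sub>\<le>\<^sub>0" by (rule Re_pos_not_nonpos_Int) (use assms in simp)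
  have g1: "Gamma (w + 1 + 1) = (w+1) * Gamma (w+1)" by (rule Gamma_plus1[OF a1])
  have g2: "Gamma (w + 3/2 + 1) = (w+3/2) * Gamma (w+3/2)" by (rule Gamma_plus1[OF a2])
  have n1: "Gamma (w+1) \<noteq> 0" "Gamma (w + 3/2) \<noteq> 0" using a1 a2 by (simp_all add: Gamma_eq_zero_iff)
  have w1: "w + 1 \<noteq> 0" "2*w+3 \<noteq> 0" "2*w+2 \<noteq> 0" "w + 3/2 \<noteq> 0"
    using assms by (auto intro!: Re_pos_ne0)
  have e2: "w + 1 + 3/2 = w + 3/2 + 1" by simp
  define A where "A = Gamma (w+1)"
  define B where "B = Gamma (w+3/2)"
  define D where "D = w + 3/2"
  have T1: "Tg (w+1) = of_real (sqrt pi) / 2 * ((w+1) * A) / (D * B)"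
    unfolding Tg_def e2 g2 g1[symmetric] A_def B_def D_def by simp
  have T0: "Tg w = of_real (sqrt pi) / 2 * A / B" unfolding Tg_def A_def B_def by simp
  have nA: "A \<noteq> 0" "B \<noteq> 0" "D \<noteq> 0" using n1 w1 by (simp_all add: A_def B_def D_def)
  have e3: "2*w+3 = 2*D" unfolding D_def by simp
  have "Tg w * (2*w+2) = Tg (w+1) * (2*w+3)"
    unfolding T1 T0 e3 using nA by (simp add: field_simps)
  then show ?thesis using w1 by (simp add: eq_divide_eq)
qed

lemma Tg_0: "Tg 0 = 1"
  by (simp add: Tg_def Gamma_three_halves)

lemma Phi_0: "Phi 0 = 1"
proof -
  have c: "((\<lambda>t::real. 1::complex) has_integral 1) {0..1}"
    using has_integral_const_real[of "1::complex" 0 1] by simp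
  have eq: "Kf 0 0 t = 1" if t: "t \<in> {0..1::real} - {1}" for t
  proof -
    from t have "t^2 < 1" by (simp add: abs_square_less_1)
    then have "1 - t^2 \<noteq> 0" by simp
    then have "complex_of_real (1 - t^2) \<noteq> 0" by (metis of_real_eq_0_iff)
    then show "Kf 0 0 t = 1" unfolding Kf_def by (simp only: powr_zero_eq_one if_False) simp
  qed
  have "(Kf 0 0 has_integral 1) {0..1}"
    by (rule has_integral_spike_finite[where S="{1}", OF _ eq c]) simp_all
  then show ?thesis by (simp add: Phi_def integral_unique)
qed

lemma Phi_nat: "Phi (of_nat n) = Tg (of_nat n)"
proof (induction n)
  case 0
  then show ?case by (simp add: Phi_0 Tg_0)
next
  case (Suc n)
  define c where "c = (2 * of_nat n + 3 :: complex) / (2 * of_nat n + 2)"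
  have r1: "Phi (of_nat n) = Phi (of_nat n + 1) * c"
    unfolding c_def using Phi_rec[of "of_nat n"] by simp
  have r2: "Tg (of_nat n) = Tg (of_nat n + 1) * c"
    unfolding c_def using Tg_rec[of "of_nat n"] by simp
  have nz: "(2 * of_nat n + 3 :: complex) \<noteq> 0" "(2 * of_nat n + 2 :: complex) \<noteq> 0"
    by (auto intro!: Re_pos_ne0)
  have c0: "c \<noteq> 0" unfolding c_def using nz by simp
  have "Phi (of_nat n + 1) * c = Tg (of_nat n + 1) * c"
    using r1 r2 Suc.IH c0 by simp
  then have "Phi (of_nat n + 1) = Tg (of_nat n + 1)" using c0 by simp
  moreover have "(of_nat (Suc n) :: complex) = of_nat n + 1" by simp
  ultimately show ?case by (simp only:)
qed

lemma Phi_shift: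
  assumes "Re w > -1"
  shows "Phi w * Tg (w + of_nat n) = Tg w * Phi (w + of_nat n)"
proof (induction n)
  case 0
  then show ?case by (simp add: mult.commute)
next
  case (Suc n)
  have re: "Re (w + of_nat n) > -1" using assms by simp
  define c where "c = (2*(w + of_nat n)+3) / (2*(w + of_nat n)+2)"
  have r1: "Phi (w + of_nat n) = Phi (w + of_nat n + 1) * c"
    unfolding c_def using Phi_rec[OF re] by simp
  have r2: "Tg (w + of_nat n) = Tg (w + of_nat n + 1) * c"
    unfolding c_def using Tg_rec[OF re] by simp
  have nz1: "2*(w + of_nat n)+3 \<noteq> 0" "2*(w + of_nat n)+2 \<noteq> 0"
    using re by (auto intro!: Re_pos_ne0)
  then have c0: "c \<noteq> 0" unfolding c_def by simp
  have "(Phi w * Tg (w + of_nat n + 1)) * c = (Tg w * Phi (w + of_nat n + 1)) * c"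
    using Suc.IH unfolding r1 r2 by (simp add: mult.assoc)
  then have "Phi w * Tg (w + of_nat n + 1) = Tg w * Phi (w + of_nat n + 1)"
    using c0 by simp
  moreover have e: "w + of_nat (Suc n) = w + of_nat n + 1" by simp
  ultimately show ?case by (simp only: e)
qed




lemma poch_ratio_lim:
  assumes z1: "z1 \<notin> \<int>\<^sub>\<le>\<^sub>0" and z2: "z2 \<notin> \<int>\<^sub>\<le>\<^sub>0"
  shows "(\<lambda>n. pochhammer z1 n / pochhammer z2 n * exp ((z2 - z1) * of_real (ln (of_nat n))))
           \<longlonglongrightarrow> Gamma z2 / Gamma z1"
proof -
  have "(\<lambda>n. Gamma_series' z2 n / Gamma_series' z1 n) \<longlonglongrightarrow> Gamma z2 / Gamma z1"
    by (intro tendsto_divide Gamma_series'_LIMSEQ) (use z1 in \<open>simp add: Gamma_eq_zero_iff\<close>)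
  moreover have "eventually (\<lambda>n. Gamma_series' z2 n / Gamma_series' z1 n =
      pochhammer z1 n / pochhammer z2 n * exp ((z2 - z1) * of_real (ln (of_nat n)))) sequentially"
    using eventually_gt_at_top[of "0::nat"]
  proof eventually_elim
    case (elim n)
    have p1: "pochhammer z1 n \<noteq> 0" "pochhammer z2 n \<noteq> 0"
      using z1 z2 pochhammer_eq_0_imp_nonpos_Int by blast+
    have f: "(fact (n - 1) :: complex) \<noteq> 0" by simp
    have e: "exp ((z2 - z1) * of_real (ln (of_nat n))) =
             exp (z2 * of_real (ln (of_nat n))) / exp (z1 * of_real (ln (of_nat n)))"
      by (simp add: left_diff_distrib exp_diff)
    show ?case unfolding Gamma_series'_def e using p1 f
      by (simp add: field_simps)
  qed
  ultimately show ?thesis by (rule Lim_transform_eventually)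
qed

lemma Gamma_shift_nat:
  assumes "z \<notin> \<int>\<^sub>\<le>\<^sub>0"
  shows "Gamma (z + of_nat n) = pochhammer z n * Gamma z"
  using pochhammer_Gamma[OF assms, of n] assms by (simp add: Gamma_eq_zero_iff field_simps)

lemma Tg_ratio_lim:
  assumes w: "Re w > -1"
  shows "(\<lambda>n. Tg (w + of_nat n) / Tg (of_nat n)) \<longlonglongrightarrow> 1"
proof -
  define L where "L = (\<lambda>n::nat. complex_of_real (ln (of_nat n)))"
  have a1: "w + 1 \<notin> \<int>\<^sub>\<le>\<^sub>0" by (rule Re_pos_not_nonpos_Int) (use w in simp)
  have a2: "w + 3/2 \<notin> \<int>\<^sub>\<le>\<^sub>0" by (rule Re_pos_not_nonpos_Int) (use w in simp)
  have b1: "(1::complex) \<notin> \<int>\<^sub>\<le>\<^sub>0" by (rule Re_pos_not_nonpos_Int) simp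
  have b2: "(3/2::complex) \<notin> \<int>\<^sub>\<le>\<^sub>0" by (rule Re_pos_not_nonpos_Int) simp
  define P1 where "P1 = (\<lambda>n. pochhammer (w+1) n / pochhammer (w+3/2) n * exp ((w + 3/2 - (w+1)) * L n))"
  define P2 where "P2 = (\<lambda>n. pochhammer (3/2) n / pochhammer 1 n * exp ((1 - 3/2) * L n))"
  have l1: "P1 \<longlonglongrightarrow> Gamma (w+3/2) / Gamma (w+1)"
    unfolding P1_def L_def by (rule poch_ratio_lim[OF a1 a2])
  have l2: "P2 \<longlonglongrightarrow> Gamma 1 / Gamma (3/2)"
    unfolding P2_def L_def by (rule poch_ratio_lim[OF b2 b1])
  define K where "K = Gamma (w+1) * Gamma (3/2) / (Gamma (w+3/2) * Gamma 1)"
  have nz: "Gamma (w+1) \<noteq> 0" "Gamma (w+3/2) \<noteq> 0" "Gamma (3/2::complex) \<noteq> 0" "Gamma (1::complex) \<noteq> 0"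
    using a1 a2 b1 b2 by (simp_all add: Gamma_eq_zero_iff)
  have "(\<lambda>n. K * P1 n * P2 n) \<longlonglongrightarrow> K * (Gamma (w+3/2) / Gamma (w+1)) * (Gamma 1 / Gamma (3/2))"
    by (intro tendsto_intros l1 l2)
  also have "K * (Gamma (w+3/2) / Gamma (w+1)) * (Gamma 1 / Gamma (3/2)) = 1"
    unfolding K_def using nz by (simp add: field_simps)
  finally have lim: "(\<lambda>n. K * P1 n * P2 n) \<longlonglongrightarrow> 1" .
  have eq: "Tg (w + of_nat n) / Tg (of_nat n) = K * P1 n * P2 n" for n
  proof -
    have g1: "Gamma (w + of_nat n + 1) = pochhammer (w+1) n * Gamma (w+1)"
      using Gamma_shift_nat[OF a1, of n] by (simp add: add_ac)
    have g2: "Gamma (w + of_nat n + 3/2) = pochhammer (w+3/2) n * Gamma (w+3/2)"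
      using Gamma_shift_nat[OF a2, of n] by (simp add: add_ac)
    have g3: "Gamma (of_nat n + 1) = pochhammer 1 n * Gamma (1::complex)"
      using Gamma_shift_nat[OF b1, of n] by (simp add: add_ac)
    have g4: "Gamma (of_nat n + 3/2) = pochhammer (3/2) n * Gamma (3/2::complex)"
      using Gamma_shift_nat[OF b2, of n] by (simp add: add_ac)
    have p: "pochhammer (w+1) n \<noteq> 0" "pochhammer (w+3/2) n \<noteq> 0"
            "pochhammer (1::complex) n \<noteq> 0" "pochhammer (3/2::complex) n \<noteq> 0"
      using a1 a2 b1 b2 pochhammer_eq_0_imp_nonpos_Int by blast+
    have ex: "exp ((w + 3/2 - (w+1)) * L n) * exp ((1 - 3/2) * L n) = 1"
      by (simp add: exp_add[symmetric] algebra_simps)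
    have "Tg (w + of_nat n) / Tg (of_nat n) =
          (pochhammer (w+1) n * Gamma (w+1)) / (pochhammer (w+3/2) n * Gamma (w+3/2)) /
          ((pochhammer 1 n * Gamma 1) / (pochhammer (3/2) n * Gamma (3/2)))"
      unfolding Tg_def g1[symmetric] g2[symmetric] g3[symmetric] g4[symmetric]
      by (simp add: field_simps)
    also have "\<dots> = K * (pochhammer (w+1) n / pochhammer (w+3/2) n) * (pochhammer (3/2) n / pochhammer 1 n)"
      unfolding K_def using p nz by (simp add: field_simps)
    also have "\<dots> = K * (pochhammer (w+1) n / pochhammer (w+3/2) n) * (pochhammer (3/2) n / pochhammer 1 n)
                     * (exp ((w + 3/2 - (w+1)) * L n) * exp ((1 - 3/2) * L n))"
      unfolding ex by simp
    also have "\<dots> = K * P1 n * P2 n"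
      unfolding P1_def P2_def by (simp add: mult_ac)
    finally show ?thesis .
  qed
  show ?thesis using lim unfolding eq[symmetric] .
qed




lemma powr_minus_one_bound:
  fixes w :: complex and s :: real
  assumes s: "0 < s" "s \<le> 1" and w: "Re w > -1"
  shows "norm (of_real s powr w - 1) \<le> norm w * s powr (-2) * (1 - s)"
proof -
  have der: "((\<lambda>u. complex_of_real u powr w) has_vector_derivative (w * of_real u powr (w - 1))) (at u within {s..1})"
    if u: "u \<in> {s..1}" for u
  proof -
    have up: "u > 0" using u s by auto
    have nn: "complex_of_real u \<notin> \<real>\<^sub>\<le>\<^sub>0" using up by (auto simp: complex_nonpos_Reals_iff)
    have "((\<lambda>u. complex_of_real u powr w) has_vector_derivative (w * of_real u powr (w - 1))) (at u)"
      by (rule has_vector_derivative_real_field) (rule has_field_derivative_powr[OF nn])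
    then show ?thesis by (rule has_vector_derivative_at_within)
  qed
  have int: "((\<lambda>u. w * of_real u powr (w - 1)) has_integral (of_real 1 powr w - of_real s powr w)) {s..1}"
    by (rule fundamental_theorem_of_calculus) (use s der in auto)
  have bnd: "norm (w * of_real u powr (w - 1)) \<le> norm w * s powr (-2)" if u: "u \<in> cbox s 1" for u
  proof -
    have u': "s \<le> u" "u \<le> 1" "0 < u" using u s by auto
    have "norm (w * of_real u powr (w - 1)) = norm w * u powr (Re w - 1)"
      using u' by (simp add: norm_mult norm_powr_real_powr)
    also have "u powr (Re w - 1) \<le> u powr (-2)"
      by (rule powr_mono') (use u' w in auto)
    also have "u powr (-2) \<le> s powr (-2)"
      by (rule powr_mono2') (use u' s in auto)
    finally show ?thesis by (simp add: mult_left_mono)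
  qed
  have int': "((\<lambda>u. w * of_real u powr (w - 1)) has_integral (of_real 1 powr w - of_real s powr w)) (cbox s 1)"
    using int by (simp only: cbox_interval)
  have "0 \<le> norm w * s powr (-2)" by simp
  from has_integral_bound[OF this int' bnd] show ?thesis using s by (simp add: norm_minus_commute)
qed

lemma Kf1_nat_integral:
  "((\<lambda>t. t^2 * (1 - t^2)^m) has_integral Re (of_nat 1 / (2*(of_nat m + 1)) * Phi (of_nat m + 1))) {0..1}"
proof -
  have h: "(Kf 1 (of_nat m) has_integral (of_nat 1 / (2*(of_nat m + 1)) * Phi (of_nat m + 1))) {0..1}"
    using Kf_step[of "of_nat m" 0] by (simp add: Phi_def)
  have eq: "complex_of_real (t^2 * (1 - t^2)^m) = Kf 1 (of_nat m) t" if t: "t \<in> {0..1} - {1}" for t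
  proof -
    from t have "t^2 < 1" by (simp add: abs_square_less_1)
    then have "1 - t^2 \<noteq> 0" by simp
    then have ne: "complex_of_real (1 - t^2) \<noteq> 0" by (metis of_real_eq_0_iff)
    show ?thesis unfolding Kf_def using powr_nat'[of "complex_of_real (1 - t^2)" m] ne by simp
  qed
  have "((\<lambda>t. complex_of_real (t^2 * (1 - t^2)^m)) has_integral (of_nat 1 / (2*(of_nat m + 1)) * Phi (of_nat m + 1))) {0..1}"
    by (rule has_integral_spike_finite[where S="{1}", OF _ eq h]) simp_all
  from has_integral_linear[OF this bounded_linear_Re] show ?thesis by (simp add: o_def)
qed

lemma Phi_nonzero_nat: "Phi (of_nat n) \<noteq> 0"
  using Tg_nonzero[of "of_nat n"] by (simp add: Phi_nat)

lemma Phi_ratio_lim: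
  assumes w: "Re w > -1"
  shows "(\<lambda>n. Phi (w + of_nat n) / Phi (of_nat n)) \<longlonglongrightarrow> 1"
proof -
  define g where "g = (\<lambda>n::nat. norm w * (3/2) / real n)"
  have g0: "g \<longlonglongrightarrow> 0" unfolding g_def using lim_const_over_n[of "norm w * (3/2)"] by simp
  have ev: "eventually (\<lambda>n. norm (Phi (w + of_nat n) / Phi (of_nat n) - 1) \<le> g n) sequentially"
    using eventually_ge_at_top[of "2::nat"]
  proof eventually_elim
    case (elim n)
    define m where "m = n - 2"
    have nm: "n = m + 2" using elim unfolding m_def by simp
    have re1: "Re (w + of_nat n) > -1" using w by simp
    have i1: "Kf 0 (w + of_nat n) integrable_on {0..1}" by (rule Kf_int_all[OF re1])
    have i2: "Kf 0 (of_nat n) integrable_on {0..1}" by (rule Kf_int_all) simp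
    have hb: "((\<lambda>t. norm w * (t^2 * (1 - t^2)^m)) has_integral
             norm w * Re (of_nat 1 / (2*(of_nat m + 1)) * Phi (of_nat m + 1))) {0..1}"
      by (intro has_integral_mult_right Kf1_nat_integral)
    have pw: "norm (Kf 0 (w + of_nat n) t - Kf 0 (of_nat n) t) \<le> norm w * (t^2 * (1 - t^2)^m)"
      if t: "t \<in> {0..1}" for t
    proof (cases "t = 1")
      case True
      then show ?thesis by (simp add: Kf_def)
    next
      case False
      define s where "s = 1 - t^2"
      have "t^2 < 1" using t False by (simp add: abs_square_less_1)
      then have s0: "0 < s" "s \<le> 1" unfolding s_def by auto
      have ne: "complex_of_real s \<noteq> 0" using s0 by simp
      have k1: "Kf 0 (w + of_nat n) t = of_real s powr w * of_real (s^n)"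
        unfolding Kf_def s_def[symmetric] using ne
        by (simp add: powr_add powr_nat')
      have k2: "Kf 0 (of_nat n) t = of_real (s^n)"
        unfolding Kf_def s_def[symmetric] using ne by (simp add: powr_nat')
      have "Kf 0 (w + of_nat n) t - Kf 0 (of_nat n) t = of_real (s^n) * (of_real s powr w - 1)"
        unfolding k1 k2 by (simp add: algebra_simps)
      then have "norm (Kf 0 (w + of_nat n) t - Kf 0 (of_nat n) t) = s^n * norm (of_real s powr w - 1)"
        using s0 by (simp add: norm_mult norm_power)
      also have "\<dots> \<le> s^n * (norm w * s powr (-2) * (1 - s))"
        by (intro mult_left_mono powr_minus_one_bound s0 w) (use s0 in simp)
      also have "s^n * (norm w * s powr (-2) * (1 - s)) = norm w * ((1 - s) * (s^n * s powr (-2)))"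
        by (simp add: mult_ac)
      also have "s^n * s powr (-2) = s^m"
      proof -
        have "s^n = s^m * s^2" unfolding nm by (simp add: power_add power2_eq_square)
        moreover have "s powr (-2) = 1 / s^2" using s0 by (simp add: powr_minus_divide powr_realpow)
        ultimately show ?thesis using s0 by simp
      qed
      also have "1 - s = t^2" unfolding s_def by simp
      finally show ?thesis by (simp add: mult_ac s_def)
    qed
    have "norm (Phi (w + of_nat n) - Phi (of_nat n)) =
          norm (integral {0..1} (\<lambda>t. Kf 0 (w + of_nat n) t - Kf 0 (of_nat n) t))"
      unfolding Phi_def using i1 i2 by (simp add: integral_diff)
    also have "\<dots> \<le> integral {0..1} (\<lambda>t. norm w * (t^2 * (1 - t^2)^m))"
      by (rule integral_norm_bound_integral) (use i1 i2 hb pw in \<open>auto intro: integrable_diff\<close>)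
    also have "\<dots> = norm w * Re (of_nat 1 / (2*(of_nat m + 1)) * Phi (of_nat m + 1))"
      using hb by (rule integral_unique)
    also have "\<dots> \<le> norm w * norm (of_nat 1 / (2*(of_nat m + 1)) * Phi (of_nat m + 1))"
      by (intro mult_left_mono complex_Re_le_cmod) simp
    finally have b1: "norm (Phi (w + of_nat n) - Phi (of_nat n)) \<le>
        norm w * norm (of_nat 1 / (2*(of_nat m + 1)) * Phi (of_nat m + 1))" .
    have rec: "Phi (of_nat m + 1) = Phi (of_nat n) * (2 * of_nat n + 1) / (2 * of_nat n)"
    proof -
      have "Phi (of_nat m + 1) = Phi (of_nat m + 1 + 1) * (2 * (of_nat m + 1) + 3) / (2 * (of_nat m + 1) + 2)"
        by (rule Phi_rec) simp
      moreover have "(of_nat m + 1 + 1 :: complex) = of_nat n" unfolding nm by simp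
      moreover have "(2 * (of_nat m + 1) + 3 :: complex) = 2 * of_nat n + 1" unfolding nm by simp
      moreover have "(2 * (of_nat m + 1) + 2 :: complex) = 2 * of_nat n" unfolding nm by simp
      ultimately show ?thesis by simp
    qed
    have pn: "Phi (of_nat n) \<noteq> 0" by (rule Phi_nonzero_nat)
    have "norm (Phi (w + of_nat n) / Phi (of_nat n) - 1) = norm (Phi (w + of_nat n) - Phi (of_nat n)) / norm (Phi (of_nat n))"
      using pn by (simp add: norm_divide[symmetric] diff_divide_distrib)
    also have "\<dots> \<le> norm w * norm (of_nat 1 / (2*(of_nat m + 1)) * Phi (of_nat m + 1)) / norm (Phi (of_nat n))"
      by (intro divide_right_mono b1) simp
    also have "norm (of_nat 1 / (2*(of_nat m + 1)) * Phi (of_nat m + 1)) =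
               norm (Phi (of_nat n)) * ((2 * real n + 1) / (2 * real n * (2 * real m + 2)))"
    proof -
      have "of_nat 1 / (2*(of_nat m + 1)) * Phi (of_nat m + 1) =
            Phi (of_nat n) * of_real ((2 * real n + 1) / (2 * real n * (2 * real m + 2)))"
        unfolding rec using elim by (simp add: field_simps)
      also have "norm \<dots> = norm (Phi (of_nat n)) * ((2 * real n + 1) / (2 * real n * (2 * real m + 2)))"
      proof -
        have nn: "0 \<le> (2 * real n + 1) / (2 * real n * (2 * real m + 2))" by simp
        show ?thesis by (simp only: norm_mult norm_of_real abs_of_nonneg[OF nn])
      qed
      finally show ?thesis .
    qed
    also have "norm w * (norm (Phi (of_nat n)) * ((2 * real n + 1) / (2 * real n * (2 * real m + 2)))) / norm (Phi (of_nat n))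
             = norm w * ((2 * real n + 1) / (2 * real n * (2 * real m + 2)))"
      using pn by simp
    also have "\<dots> \<le> g n"
    proof -
      have A: "(2 * real n + 1) / (2 * (2 * real m + 2)) \<le> 3/2"
        unfolding nm by (simp add: divide_le_eq)
      have "(2 * real n + 1) / (2 * real n * (2 * real m + 2)) = ((2 * real n + 1) / (2 * (2 * real m + 2))) / real n"
        by (simp add: field_simps)
      also have "\<dots> \<le> (3/2) / real n"
        by (intro divide_right_mono A) simp
      finally have "(2 * real n + 1) / (2 * real n * (2 * real m + 2)) \<le> (3/2) / real n" .
      then have "norm w * ((2 * real n + 1) / (2 * real n * (2 * real m + 2))) \<le> norm w * ((3/2) / real n)"
        by (rule mult_left_mono) simp
      then show ?thesis unfolding g_def by simp
    qed
    finally show ?case .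
  qed
  have "(\<lambda>n. Phi (w + of_nat n) / Phi (of_nat n) - 1) \<longlonglongrightarrow> 0"
    by (rule Lim_null_comparison[OF ev g0])
  then show ?thesis by (simp add: LIM_zero_iff)
qed

lemma Phi_eq_Tg:
  assumes w: "Re w > -1"
  shows "Phi w = Tg w"
proof -
  have eq: "Phi w * (Tg (w + of_nat n) / Tg (of_nat n)) = Tg w * (Phi (w + of_nat n) / Phi (of_nat n))" for n
    using Phi_shift[OF w, of n] by (simp add: Phi_nat)
  have "(\<lambda>n. Phi w * (Tg (w + of_nat n) / Tg (of_nat n))) \<longlonglongrightarrow> Phi w * 1"
    by (intro tendsto_intros Tg_ratio_lim w)
  moreover have "(\<lambda>n. Phi w * (Tg (w + of_nat n) / Tg (of_nat n))) \<longlonglongrightarrow> Tg w * 1"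
    unfolding eq by (intro tendsto_intros Phi_ratio_lim w)
  ultimately show ?thesis using LIMSEQ_unique by fastforce
qed

lemma Kf_integral:
  assumes "Re w > -1"
  shows "(Kf j w has_integral (Gamma (of_nat j + 1/2) * Gamma (w + 1) / (2 * Gamma (of_nat j + w + 3/2)))) {0..1}"
  using assms
proof (induction j arbitrary: w)
  case 0
  have "(Kf 0 w has_integral Phi w) {0..1}"
    unfolding Phi_def by (rule integrable_integral, rule Kf_int_all, rule 0)
  also have "Phi w = Gamma (of_nat 0 + 1/2) * Gamma (w + 1) / (2 * Gamma (of_nat 0 + w + 3/2))"
    using Phi_eq_Tg[OF 0] by (simp add: Tg_def Gamma_one_half_complex)
  finally show ?case .
next
  case (Suc j)
  have re: "Re (w+1) > -1" using Suc.prems by simp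
  have IH: "integral {0..1} (Kf j (w+1)) = Gamma (of_nat j + 1/2) * Gamma (w + 1 + 1) / (2 * Gamma (of_nat j + (w + 1) + 3/2))"
    using Suc.IH[OF re] by (rule integral_unique)
  have a1: "(of_nat j + 1/2 :: complex) \<notin> \<int>\<^sub>\<le>\<^sub>0" by (rule Re_pos_not_nonpos_Int) simp
  have a2: "w + 1 \<notin> \<int>\<^sub>\<le>\<^sub>0" by (rule Re_pos_not_nonpos_Int) (use Suc.prems in simp)
  have g1: "Gamma (of_nat j + 1/2 + 1) = (of_nat j + 1/2) * Gamma (of_nat j + 1/2 :: complex)" by (rule Gamma_plus1[OF a1])
  have g2: "Gamma (w + 1 + 1) = (w + 1) * Gamma (w + 1)" by (rule Gamma_plus1[OF a2])
  have w1: "w + 1 \<noteq> 0" using Suc.prems by (auto intro!: Re_pos_ne0)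
  have e1: "(of_nat (Suc j) + 1/2 :: complex) = of_nat j + 1/2 + 1" by simp
  have e2: "(of_nat (Suc j) + w + 3/2 :: complex) = of_nat j + (w + 1) + 3/2" by simp
  define G where "G = Gamma (of_nat j + (w + 1) + 3/2)"
  have d: "G * 4 + G * (w * 4) \<noteq> 0"
  proof -
    have "G * 4 + G * (w * 4) = 4 * (G * (1 + w))" by (simp add: algebra_simps)
    moreover have "G \<noteq> 0" unfolding G_def
      by (subst Gamma_eq_zero_iff, rule Re_pos_not_nonpos_Int) (use Suc.prems in simp)
    ultimately show ?thesis using w1 by (simp add: add.commute)
  qed
  have nG: "G \<noteq> 0" unfolding G_def
    by (subst Gamma_eq_zero_iff, rule Re_pos_not_nonpos_Int) (use Suc.prems in simp)
  have "(Kf (Suc j) w has_integral (of_nat (2*j+1) / (2*(w+1)) * integral {0..1} (Kf j (w+1)))) {0..1}"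
    by (rule Kf_step[OF Suc.prems])
  also have "of_nat (2*j+1) / (2*(w+1)) * integral {0..1} (Kf j (w+1)) =
      Gamma (of_nat (Suc j) + 1/2) * Gamma (w + 1) / (2 * Gamma (of_nat (Suc j) + w + 3/2))"
    unfolding IH e1 e2 g1 g2 G_def[symmetric] using w1 nG d by (simp add: field_simps)
  finally show ?case .
qed




definition vdS :: "complex \<Rightarrow> nat \<Rightarrow> nat \<Rightarrow> complex" where
  "vdS c m n = (\<Sum>k\<le>n. of_nat (m choose k) * of_nat (n choose k) * fact k / pochhammer c k)"

lemma vdS_0 [simp]: "vdS c m 0 = 1"
  by (simp add: vdS_def)

lemma vdS_m0 [simp]: "vdS c 0 n = 1"
proof -
  have "vdS c 0 n = (\<Sum>k\<in>{0}. of_nat (0 choose k) * of_nat (n choose k) * fact k / pochhammer c k)"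
    unfolding vdS_def by (rule sum.mono_neutral_right) auto
  then show ?thesis by simp
qed

lemma vdS_Suc:
  assumes "Re c > 0"
  shows "vdS c (Suc m) (Suc n) = vdS c (Suc m) n + of_nat (Suc m) / c * vdS (c+1) m n"
proof -
  have c0: "c \<noteq> 0" using assms by auto
  define g where "g = (\<lambda>k. of_nat (Suc m choose k) * of_nat (n choose k) * fact k / pochhammer c k :: complex)"
  define h where "h = (\<lambda>k. of_nat (Suc m choose Suc k) * of_nat (n choose k) * fact (Suc k) / pochhammer c (Suc k) :: complex)"
  have "vdS c (Suc m) (Suc n) = (\<Sum>k\<le>Suc n. of_nat (Suc m choose k) * of_nat (Suc n choose k) * fact k / pochhammer c k)"
    by (simp add: vdS_def)
  also have "\<dots> = 1 + (\<Sum>k\<le>n. of_nat (Suc m choose Suc k) * of_nat (Suc n choose Suc k) * fact (Suc k) / pochhammer c (Suc k))"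
    by (subst sum.atMost_Suc_shift) simp
  also have "\<dots> = 1 + (\<Sum>k\<le>n. g (Suc k) + h k)"
    by (simp add: g_def h_def algebra_simps add_divide_distrib)
  also have "\<dots> = (g 0 + (\<Sum>k\<le>n. g (Suc k))) + (\<Sum>k\<le>n. h k)"
    by (simp add: sum.distrib g_def)
  also have "g 0 + (\<Sum>k\<le>n. g (Suc k)) = (\<Sum>k\<le>Suc n. g k)"
    by (subst sum.atMost_Suc_shift) simp
  also have "\<dots> = vdS c (Suc m) n"
    by (simp add: g_def vdS_def)
  also have "(\<Sum>k\<le>n. h k) = of_nat (Suc m) / c * vdS (c+1) m n"
  proof -
    have "h k = of_nat (Suc m) / c * (of_nat (m choose k) * of_nat (n choose k) * fact k / pochhammer (c+1) k)" for k
    proof -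
      have H: "Suc k * (Suc m choose Suc k) = Suc m * (m choose k)" by (rule Suc_times_binomial)
      have E: "of_nat (Suc k) * of_nat (Suc m choose Suc k) = of_nat (Suc m) * (of_nat (m choose k) :: complex)"
      proof -
        have "(of_nat (Suc k * (Suc m choose Suc k)) :: complex) = of_nat (Suc m * (m choose k))"
          using H by (simp only:)
        then show ?thesis by (simp only: of_nat_mult)
      qed
      have b: "of_nat (Suc m choose Suc k) * (fact (Suc k) :: complex) = of_nat (Suc m) * of_nat (m choose k) * fact k"
      proof -
        have "of_nat (Suc m choose Suc k) * (fact (Suc k) :: complex) =
              (of_nat (Suc k) * of_nat (Suc m choose Suc k)) * fact k"
          by (simp only: fact_Suc mult.assoc mult.commute mult.left_commute)
        also have "\<dots> = (of_nat (Suc m) * of_nat (m choose k)) * fact k" unfolding E ..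
        finally show ?thesis .
      qed
      have p: "pochhammer c (Suc k) = c * pochhammer (c+1) k" by (simp add: pochhammer_rec)
      have "h k = (of_nat (Suc m choose Suc k) * fact (Suc k)) * of_nat (n choose k) / (c * pochhammer (c+1) k)"
        unfolding h_def p by (simp only: mult_ac)
      also have "\<dots> = (of_nat (Suc m) * of_nat (m choose k) * fact k) * of_nat (n choose k) / (c * pochhammer (c+1) k)"
        unfolding b ..
      also have "\<dots> = of_nat (Suc m) / c * (of_nat (m choose k) * of_nat (n choose k) * fact k / pochhammer (c+1) k)"
        using c0 by (simp add: field_simps)
      finally show ?thesis .
    qed
    then show ?thesis by (simp add: vdS_def sum_distrib_left)
  qed
  finally show ?thesis .
qed

lemma vdm:
  fixes c :: complex
  assumes "Re c > 0"
  shows "pochhammer c (m+n) = pochhammer c m * pochhammer c n * vdS c m n"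
  using assms
proof (induction n arbitrary: m c)
  case 0
  then show ?case by simp
next
  case (Suc n m c)
  show ?case
  proof (cases m)
    case 0
    then show ?thesis by simp
  next
    case (Suc m')
    have IH1: "pochhammer c (m+n) = pochhammer c m * pochhammer c n * vdS c m n"
      by (rule Suc.IH) (rule Suc.prems)
    have IH2: "pochhammer (c+1) (m'+n) = pochhammer (c+1) m' * pochhammer (c+1) n * vdS (c+1) m' n"
      by (rule Suc.IH) (use Suc.prems in simp)
    have c0: "c \<noteq> 0" using Suc.prems by auto
    have r: "vdS c m (Suc n) = vdS c m n + of_nat m / c * vdS (c+1) m' n"
      unfolding Suc by (rule vdS_Suc[OF Suc.prems])
    have p1: "pochhammer c (Suc n) = (c + of_nat n) * pochhammer c n" by (simp add: pochhammer_rec')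
    have p2: "pochhammer c m = c * pochhammer (c+1) m'" unfolding Suc by (simp add: pochhammer_rec)
    have p3: "pochhammer c (Suc n) = c * pochhammer (c+1) n" by (simp add: pochhammer_rec)
    have p4: "pochhammer c (m + n) = c * pochhammer (c+1) (m'+n)" unfolding Suc by (simp add: pochhammer_rec)
    have p5: "pochhammer c (m + Suc n) = (c + of_nat (m+n)) * pochhammer c (m+n)" by (simp add: pochhammer_rec')
    have t1: "pochhammer c m * pochhammer c (Suc n) * vdS c m n = (c + of_nat n) * (pochhammer c m * pochhammer c n * vdS c m n)"
      by (simp only: p1 mult_ac)
    have t2: "pochhammer c m * pochhammer c (Suc n) * (of_nat m / c * vdS (c+1) m' n) =
              of_nat m * (c * (pochhammer (c+1) m' * pochhammer (c+1) n * vdS (c+1) m' n))"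
      unfolding p2 p3 using c0 by (simp add: field_simps)
    have "pochhammer c m * pochhammer c (Suc n) * vdS c m (Suc n) =
          (c + of_nat n) * (pochhammer c m * pochhammer c n * vdS c m n) +
          of_nat m * (c * (pochhammer (c+1) m' * pochhammer (c+1) n * vdS (c+1) m' n))"
      unfolding r distrib_left t1[symmetric] t2[symmetric] ..
    also have "\<dots> = (c + of_nat n) * pochhammer c (m+n) + of_nat m * pochhammer c (m+n)"
      unfolding IH1[symmetric] IH2[symmetric] p4 by simp
    also have "\<dots> = pochhammer c (m + Suc n)"
      unfolding p5 by (simp add: algebra_simps)
    finally show ?thesis by simp
  qed
qed




definition al :: "complex \<Rightarrow> real \<Rightarrow> nat \<Rightarrow> complex" where
  "al \<nu> u m = (-1)^m * of_real (u^(2*m)) / (fact m * Gamma (of_nat m + \<nu> + 1))"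

definition Wt :: "complex \<Rightarrow> real \<Rightarrow> real \<Rightarrow> nat \<times> nat \<times> nat \<Rightarrow> complex" where
  "Wt \<nu> u v = (\<lambda>(k,p,q). (-1)^(p+q) * of_real (u^(2*(k+p)) * v^(2*(k+q))) /
      (Gamma (of_nat (2*k+p+q) + \<nu> + 1) * fact k * fact p * fact q * Gamma (of_nat k + \<nu> + 1)))"

lemma Gamma_nat_shift':
  assumes "Re \<nu> > -1"
  shows "Gamma (of_nat j + \<nu> + 1) = pochhammer (\<nu>+1) j * Gamma (\<nu>+1)"
proof -
  have a: "\<nu> + 1 \<notin> \<int>\<^sub>\<le>\<^sub>0" by (rule Re_pos_not_nonpos_Int) (use assms in simp)
  have "Gamma (\<nu> + 1 + of_nat j) = pochhammer (\<nu>+1) j * Gamma (\<nu>+1)" by (rule Gamma_shift_nat[OF a])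
  then show ?thesis by (simp add: add_ac)
qed

lemma neg1_pow_eq: "k \<le> m \<Longrightarrow> k \<le> n \<Longrightarrow> ((-1::complex)^((m-k)+(n-k))) = (-1)^(m+n)"
proof -
  assume "k \<le> m" "k \<le> n"
  then have e: "m + n = ((m-k)+(n-k)) + 2*k" by simp
  show ?thesis unfolding e by (simp add: power_add power_mult)
qed

lemma al_mult_Wt:
  assumes nu: "Re \<nu> > -1/2"
  shows "al \<nu> u m * al \<nu> v n = (\<Sum>k\<le>min m n. Wt \<nu> u v (k, m-k, n-k))"
proof -
  define c where "c = \<nu> + 1"
  have rc: "Re c > 0" using nu unfolding c_def by simp
  have nu1: "Re \<nu> > -1" using nu by simp
  define G0 where "G0 = Gamma c"
  define P where "P = pochhammer c"
  have G0nz: "G0 \<noteq> 0" unfolding G0_def using Re_pos_not_nonpos_Int[OF rc] by (simp add: Gamma_eq_zero_iff)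
  have Pnz: "P j \<noteq> 0" for j unfolding P_def using Re_pos_not_nonpos_Int[OF rc] pochhammer_eq_0_imp_nonpos_Int by blast
  have GS: "Gamma (of_nat j + \<nu> + 1) = P j * G0" for j
    unfolding P_def G0_def c_def by (rule Gamma_nat_shift'[OF nu1])
  define Kmn where "Kmn = (-1)^(m+n) * of_real (u^(2*m) * v^(2*n)) / (G0^2 * P (m+n) * fact m * fact n)"
  have tm: "Wt \<nu> u v (k, m-k, n-k) = Kmn * (of_nat (m choose k) * of_nat (n choose k) * fact k / P k)"
    if k: "k \<in> {..min m n}" for k
  proof -
    have km: "k \<le> m" "k \<le> n" using k by auto
    have e1: "2*k + (m-k) + (n-k) = m + n" "k + (m-k) = m" "k + (n-k) = n" using km by auto
    have b1: "(of_nat (m choose k) :: complex) = fact m / (fact k * fact (m-k))" by (rule binomial_fact[OF km(1)])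
    have b2: "(of_nat (n choose k) :: complex) = fact n / (fact k * fact (n-k))" by (rule binomial_fact[OF km(2)])
    have "Wt \<nu> u v (k, m-k, n-k) = (-1)^((m-k)+(n-k)) * of_real (u^(2*(k+(m-k))) * v^(2*(k+(n-k)))) /
      (Gamma (of_nat (2*k+(m-k)+(n-k)) + \<nu> + 1) * fact k * fact (m-k) * fact (n-k) * Gamma (of_nat k + \<nu> + 1))"
      unfolding Wt_def by (simp only: prod.case)
    also have "\<dots> = (-1)^(m+n) * of_real (u^(2*m) * v^(2*n)) /
            (P (m+n) * G0 * fact k * fact (m-k) * fact (n-k) * (P k * G0))"
      by (simp only: e1 GS neg1_pow_eq[OF km])
    also have "\<dots> = Kmn * (of_nat (m choose k) * of_nat (n choose k) * fact k / P k)"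
      unfolding Kmn_def b1 b2 using G0nz Pnz by (simp add: field_simps power2_eq_square)
    finally show ?thesis .
  qed
  have "(\<Sum>k\<le>min m n. Wt \<nu> u v (k, m-k, n-k)) =
        (\<Sum>k\<le>min m n. Kmn * (of_nat (m choose k) * of_nat (n choose k) * fact k / P k))"
    by (rule sum.cong) (simp_all add: tm)
  also have "\<dots> = Kmn * (\<Sum>k\<le>min m n. of_nat (m choose k) * of_nat (n choose k) * fact k / P k)"
    by (simp add: sum_distrib_left)
  also have "(\<Sum>k\<le>min m n. of_nat (m choose k) * of_nat (n choose k) * fact k / P k) = vdS c m n"
    unfolding vdS_def P_def
    by (rule sum.mono_neutral_left) auto
  also have "vdS c m n = P (m+n) / (P m * P n)"
    using vdm[OF rc, of m n] Pnz unfolding P_def by (simp add: field_simps)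
  also have "Kmn * (P (m+n) / (P m * P n)) = al \<nu> u m * al \<nu> v n"
    unfolding Kmn_def al_def GS using G0nz Pnz by (simp add: field_simps power2_eq_square power_add)
  finally show ?thesis ..
qed




definition KI :: "nat \<Rightarrow> complex \<Rightarrow> complex" where
  "KI j w = Gamma (of_nat j + 1/2) * Gamma (w + 1) / (2 * Gamma (of_nat j + w + 3/2))"

definition wk :: "complex \<Rightarrow> nat \<Rightarrow> complex" where
  "wk \<nu> k = \<nu> - 1/2 + 2 * of_nat k"

definition pk :: "complex \<Rightarrow> nat \<Rightarrow> complex" where
  "pk \<nu> k = pochhammer (\<nu>+1) k * pochhammer (\<nu>/2+1/4) k * pochhammer (\<nu>/2+3/4) k * fact k"

lemma Gamma_half_nat: "Gamma (of_nat j + 1/2 :: complex) = fact (2*j) * of_real (sqrt pi) / (4^j * fact j)"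
proof -
  have a: "(1/2 :: complex) \<notin> \<int>\<^sub>\<le>\<^sub>0" by (rule Re_pos_not_nonpos_Int) simp
  have g: "Gamma (1/2 + of_nat j :: complex) = pochhammer (1/2) j * of_real (sqrt pi)"
    using Gamma_shift_nat[OF a, of j] by (simp add: Gamma_one_half_complex)
  have d: "pochhammer (2 * (1/2::complex)) (2*j) = of_nat (2^(2*j)) * pochhammer (1/2) j * pochhammer (1/2+1/2) j"
    by (rule pochhammer_double)
  then have d': "(fact (2*j) :: complex) = 4^j * pochhammer (1/2) j * fact j"
    by (simp add: pochhammer_fact power_mult)
  show ?thesis using g d' by (simp add: add.commute field_simps)
qed

lemma Gamma_wk:
  assumes nu: "Re \<nu> > -1/2"
  shows "Gamma (wk \<nu> k + 1) = 4^k * pochhammer (\<nu>/2+1/4) k * pochhammer (\<nu>/2+3/4) k * Gamma (\<nu>+1/2)"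
proof -
  have a: "\<nu> + 1/2 \<notin> \<int>\<^sub>\<le>\<^sub>0" by (rule Re_pos_not_nonpos_Int) (use nu in simp)
  have e: "wk \<nu> k + 1 = \<nu> + 1/2 + of_nat (2*k)" unfolding wk_def by simp
  have g: "Gamma (\<nu> + 1/2 + of_nat (2*k)) = pochhammer (\<nu>+1/2) (2*k) * Gamma (\<nu>+1/2)"
    by (rule Gamma_shift_nat[OF a])
  have d: "pochhammer (2 * (\<nu>/2+1/4)) (2*k) = of_nat (2^(2*k)) * pochhammer (\<nu>/2+1/4) k * pochhammer (\<nu>/2+1/4+1/2) k"
    by (rule pochhammer_double)
  have e2: "2 * (\<nu>/2+1/4) = \<nu> + 1/2" "\<nu>/2+1/4+1/2 = \<nu>/2+3/4" by simp_all
  show ?thesis unfolding e g using d unfolding e2 by (simp add: power_mult)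
qed

lemma Gamma_dup:
  assumes nu: "Re \<nu> > -1/2"
  shows "Gamma (\<nu>+1/2) * Gamma (\<nu>+1) * (of_real 4 powr \<nu>) = of_real (sqrt pi) * Gamma (2*\<nu>+1)"
proof -
  have a1: "\<nu> + 1/2 \<notin> \<int>\<^sub>\<le>\<^sub>0" by (rule Re_pos_not_nonpos_Int) (use nu in simp)
  have a2: "\<nu> + 1/2 + 1/2 \<notin> \<int>\<^sub>\<le>\<^sub>0" by (rule Re_pos_not_nonpos_Int) (use nu in simp)
  have L: "Gamma (\<nu>+1/2) * Gamma (\<nu>+1/2+1/2) =
      exp ((1 - 2*(\<nu>+1/2)) * of_real (ln 2)) * of_real (sqrt pi) * Gamma (2*(\<nu>+1/2))"
    by (rule Gamma_legendre_duplication[OF a1 a2])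
  have e1: "\<nu>+1/2+1/2 = \<nu>+1" "2*(\<nu>+1/2) = 2*\<nu>+1" "(1 - 2*(\<nu>+1/2)) = - (2*\<nu>)" by simp_all
  have p4: "of_real 4 powr \<nu> = exp (2*\<nu> * of_real (ln 2))"
  proof -
    have "Ln (of_real 4) = of_real (ln 4)" using Ln_of_real[of 4] by simp
    moreover have "ln (4::real) = 2 * ln 2"
      using ln_realpow[of 2 2] by simp
    ultimately show ?thesis by (simp add: powr_def mult_ac)
  qed
  have ex: "exp (- (2*\<nu>) * of_real (ln 2)) * exp (2*\<nu> * of_real (ln 2)) = 1"
    by (simp add: exp_add[symmetric])
  have L': "Gamma (\<nu>+1/2) * Gamma (\<nu>+1) = exp (- (2*\<nu>) * of_real (ln 2)) * of_real (sqrt pi) * Gamma (2*\<nu>+1)"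
    using L unfolding e1(3) unfolding e1(1,2) .
  have "Gamma (\<nu>+1/2) * Gamma (\<nu>+1) * (of_real 4 powr \<nu>) =
     (exp (- (2*\<nu>) * of_real (ln 2)) * exp (2*\<nu> * of_real (ln 2))) * (of_real (sqrt pi) * Gamma (2*\<nu>+1))"
    unfolding L' p4 by (simp only: mult_ac)
  then show ?thesis unfolding ex by simp
qed




lemma TERM:
  assumes nu: "Re \<nu> > -1/2"
  shows "2 * of_real 4 powr \<nu> / (of_real pi * Gamma (2*\<nu>+1)) *
     ((-1)^(p+q) * 4^(p+q) * of_nat ((p+q) choose p) * of_real (u^(2*p) * v^(2*q)) / fact (2*(p+q))) *
     (of_real ((u^2 * v^2 / 4)^k) / pk \<nu> k) * KI (p+q) (wk \<nu> k) = Wt \<nu> u v (k,p,q)"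
proof -
  define j where "j = p + q"
  have nu1: "Re \<nu> > -1" using nu by simp
  define sp where "sp = complex_of_real (sqrt pi)"
  define F where "F = complex_of_real 4 powr \<nu>"
  define G1 where "G1 = Gamma (\<nu>+1/2)"
  define G2 where "G2 = Gamma (\<nu>+1)"
  define GN where "GN = Gamma (of_nat (2*k+p+q) + \<nu> + 1)"
  define Q1 where "Q1 = pochhammer (\<nu>/2+1/4) k"
  define Q2 where "Q2 = pochhammer (\<nu>/2+3/4) k"
  define Pk where "Pk = pochhammer (\<nu>+1) k"
  define X where "X = complex_of_real (u^(2*(k+p)) * v^(2*(k+q)))"
  have a1: "\<nu> + 1/2 \<notin> \<int>\<^sub>\<le>\<^sub>0" by (rule Re_pos_not_nonpos_Int) (use nu in simp)
  have a2: "\<nu> + 1 \<notin> \<int>\<^sub>\<le>\<^sub>0" by (rule Re_pos_not_nonpos_Int) (use nu in simp)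
  have a3: "of_nat (2*k+p+q) + \<nu> + 1 \<notin> \<int>\<^sub>\<le>\<^sub>0" by (rule Re_pos_not_nonpos_Int) (use nu in simp)
  have a4: "\<nu>/2+1/4 \<notin> \<int>\<^sub>\<le>\<^sub>0" by (rule Re_pos_not_nonpos_Int) (use nu in simp)
  have a5: "\<nu>/2+3/4 \<notin> \<int>\<^sub>\<le>\<^sub>0" by (rule Re_pos_not_nonpos_Int) (use nu in simp)
  have nz: "sp \<noteq> 0" "F \<noteq> 0" "G1 \<noteq> 0" "G2 \<noteq> 0" "GN \<noteq> 0" "Q1 \<noteq> 0" "Q2 \<noteq> 0" "Pk \<noteq> 0"
    unfolding sp_def F_def G1_def G2_def GN_def Q1_def Q2_def Pk_def
    using a1 a2 a3 a4 a5 pochhammer_eq_0_imp_nonpos_Int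
    by (auto simp: Gamma_eq_zero_iff powr_def)
  have pi_eq: "complex_of_real pi = sp * sp"
    unfolding sp_def by (simp flip: of_real_mult)
  have G2nu: "Gamma (2*\<nu>+1) = G1 * G2 * F / sp"
    using Gamma_dup[OF nu] nz unfolding G1_def G2_def F_def sp_def by (simp add: field_simps)
  have Gj: "Gamma (of_nat j + 1/2) = fact (2*j) * sp / (4^j * fact j)"
    unfolding sp_def by (rule Gamma_half_nat)
  have Gw: "Gamma (wk \<nu> k + 1) = 4^k * Q1 * Q2 * G1"
    unfolding Q1_def Q2_def G1_def by (rule Gamma_wk[OF nu])
  have eN: "of_nat j + wk \<nu> k + 3/2 = of_nat (2*k+p+q) + \<nu> + 1"
    unfolding wk_def j_def by simp
  have GNk: "Gamma (of_nat k + \<nu> + 1) = Pk * G2"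
    unfolding Pk_def G2_def by (rule Gamma_nat_shift'[OF nu1])
  have KIe: "KI j (wk \<nu> k) = (fact (2*j) * sp / (4^j * fact j)) * (4^k * Q1 * Q2 * G1) / (2 * GN)"
    unfolding KI_def Gj Gw eN GN_def ..
  have pke: "pk \<nu> k = Pk * Q1 * Q2 * fact k"
    unfolding pk_def Pk_def Q1_def Q2_def ..
  have be: "(of_nat (j choose p) :: complex) = fact j / (fact p * fact q)"
    using binomial_fact[of p j] unfolding j_def by simp
  have re: "complex_of_real (u^(2*p) * v^(2*q)) * complex_of_real ((u^2 * v^2 / 4)^k) = X / 4^k"
  proof -
    have h: "(u^2 * v^2 / 4)^k = u^(2*k) * v^(2*k) / 4^k"
      by (simp add: power_divide power_mult_distrib power_mult)
    have "u^(2*p) * v^(2*q) * (u^2 * v^2 / 4)^k = u^(2*(k+p)) * v^(2*(k+q)) / 4^k"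
      unfolding h by (simp add: power_add distrib_left mult_ac)
    then have "complex_of_real (u^(2*p) * v^(2*q) * (u^2 * v^2 / 4)^k) = complex_of_real (u^(2*(k+p)) * v^(2*(k+q)) / 4^k)"
      by (rule arg_cong)
    then show ?thesis unfolding X_def by (simp only: of_real_mult of_real_divide of_real_power of_real_numeral)
  qed
  have We: "Wt \<nu> u v (k,p,q) = (-1)^j * X / (GN * fact k * fact p * fact q * (Pk * G2))"
    unfolding Wt_def X_def GN_def j_def GNk[symmetric] by simp
  have "2 * F / (of_real pi * Gamma (2*\<nu>+1)) *
     ((-1)^j * 4^j * of_nat (j choose p) * of_real (u^(2*p) * v^(2*q)) / fact (2*j)) *
     (of_real ((u^2 * v^2 / 4)^k) / pk \<nu> k) * KI j (wk \<nu> k) =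
     2 * F / ((sp * sp) * (G1 * G2 * F / sp)) *
     ((-1)^j * 4^j * (fact j / (fact p * fact q)) / fact (2*j)) *
     ((complex_of_real (u^(2*p) * v^(2*q)) * complex_of_real ((u^2 * v^2 / 4)^k)) / (Pk * Q1 * Q2 * fact k)) *
     ((fact (2*j) * sp / (4^j * fact j)) * (4^k * Q1 * Q2 * G1) / (2 * GN))"
    unfolding pi_eq G2nu be pke KIe by (simp add: field_simps)
  also have "\<dots> = 2 * F / ((sp * sp) * (G1 * G2 * F / sp)) *
     ((-1)^j * 4^j * (fact j / (fact p * fact q)) / fact (2*j)) *
     ((X / 4^k) / (Pk * Q1 * Q2 * fact k)) *
     ((fact (2*j) * sp / (4^j * fact j)) * (4^k * Q1 * Q2 * G1) / (2 * GN))"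
    unfolding re ..
  also have "\<dots> = (-1)^j * X / (GN * fact k * fact p * fact q * (Pk * G2))"
    using nz by (simp add: field_simps)
  finally show ?thesis unfolding We F_def[symmetric] j_def[symmetric] .
qed




lemma XCH:
  fixes g :: "nat \<Rightarrow> real \<Rightarrow> complex" and G :: "nat \<Rightarrow> real \<Rightarrow> real" and f :: "real \<Rightarrow> complex"
  assumes gi: "\<And>n. (g n has_integral I n) {0..1}"
    and Gi: "\<And>n. G n integrable_on {0..1}"
    and gG: "\<And>n t. t \<in> {0..1} \<Longrightarrow> norm (g n t) \<le> G n t"
    and sG: "summable (\<lambda>n. integral {0..1} (G n))"
    and sGt: "\<And>t. t \<in> {0..1} \<Longrightarrow> summable (\<lambda>n. G n t)"
    and sf: "\<And>t. t \<in> {0..1} \<Longrightarrow> (\<lambda>n. g n t) sums f t"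
  shows "(f has_integral (\<Sum>n. I n)) {0..1}" and "summable I"
proof -
  have G0: "0 \<le> G n t" if "t \<in> {0..1}" for n t using gG[OF that, of n] norm_ge_zero order_trans by blast
  have iG0: "0 \<le> integral {0..1} (G n)" for n by (rule integral_nonneg[OF Gi]) (use G0 in auto)
  define H where "H = (\<lambda>k t. \<Sum>n<k. G n t)"
  define h where "h = (\<lambda>t. \<Sum>n. G n t)"
  have Hi: "H k integrable_on {0..1}" for k unfolding H_def by (intro integrable_sum Gi) simp
  have intH: "integral {0..1} (H k) = (\<Sum>n<k. integral {0..1} (G n))" for k
    unfolding H_def by (rule integral_sum) (auto intro: Gi)
  have mc: "h integrable_on {0..1} \<and> ((\<lambda>k. integral {0..1} (H k)) \<longlongrightarrow> integral {0..1} h) sequentially"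
  proof (rule monotone_convergence_increasing)
    show "H k integrable_on {0..1}" for k by (rule Hi)
    show "H k t \<le> H (Suc k) t" if "t \<in> {0..1}" for k t unfolding H_def using G0[OF that, of k] by simp
    show "((\<lambda>k. H k t) \<longlongrightarrow> h t) sequentially" if "t \<in> {0..1}" for t
      unfolding H_def h_def using summable_LIMSEQ[OF sGt[OF that]] .
    show "bounded (range (\<lambda>k. integral {0..1} (H k)))"
    proof -
      have "norm (integral {0..1} (H k)) \<le> (\<Sum>n. integral {0..1} (G n))" for k
      proof -
        have "0 \<le> (\<Sum>n<k. integral {0..1} (G n))" by (intro sum_nonneg iG0)
        moreover have "(\<Sum>n<k. integral {0..1} (G n)) \<le> (\<Sum>n. integral {0..1} (G n))"
          by (rule sum_le_suminf[OF sG]) (auto intro: iG0)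
        ultimately show ?thesis unfolding intH by simp
      qed
      then show ?thesis by (auto simp: bounded_iff)
    qed
  qed
  have hi: "h integrable_on {0..1}" using mc by blast
  have nI: "norm (I n) \<le> integral {0..1} (G n)" for n
  proof -
    have "I n = integral {0..1} (g n)" using gi[of n] by (simp add: integral_unique)
    also have "norm \<dots> \<le> integral {0..1} (G n)"
      by (rule integral_norm_bound_integral) (use gi Gi gG in auto)
    finally show ?thesis .
  qed
  show sI: "summable I"
    by (rule summable_comparison_test'[OF sG]) (rule nI)
  show "(f has_integral (\<Sum>n. I n)) {0..1}"
  proof (rule has_integral_dominated_convergence[where f = "\<lambda>k t. \<Sum>n<k. g n t" and h = h and y = "\<lambda>k. \<Sum>n<k. I n"])
    show "((\<lambda>t. \<Sum>n<k. g n t) has_integral (\<Sum>n<k. I n)) {0..1}" for k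
      by (rule has_integral_sum) (auto intro: gi)
    show "h integrable_on {0..1}" by (rule hi)
    show "\<forall>t\<in>{0..1}. norm (\<Sum>n<k. g n t) \<le> h t" for k
    proof
      fix t :: real assume t: "t \<in> {0..1}"
      have "norm (\<Sum>n<k. g n t) \<le> (\<Sum>n<k. norm (g n t))" by (rule norm_sum)
      also have "\<dots> \<le> (\<Sum>n<k. G n t)" by (intro sum_mono gG t)
      also have "\<dots> \<le> h t" unfolding h_def
        by (rule sum_le_suminf[OF sGt[OF t]]) (auto intro: G0[OF t])
      finally show "norm (\<Sum>n<k. g n t) \<le> h t" .
    qed
    show "\<forall>t\<in>{0..1}. (\<lambda>k. \<Sum>n<k. g n t) \<longlonglongrightarrow> f t"
      using sf by (simp add: sums_def)
    show "(\<lambda>k. \<Sum>n<k. I n) \<longlonglongrightarrow> (\<Sum>n. I n)"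
      by (rule summable_LIMSEQ[OF sI])
  qed
qed

definition Kr :: "nat \<Rightarrow> real \<Rightarrow> real \<Rightarrow> real" where
  "Kr j r t = t ^ (2*j) * (1 - t^2) powr r"

lemma one_minus_sq_nonneg: "t \<in> {0..1::real} \<Longrightarrow> 0 \<le> 1 - t^2"
  by (auto intro: power_le_one)

lemma norm_Kf: "t \<in> {0..1} \<Longrightarrow> norm (Kf j w t) = Kr j (Re w) t"
proof -
  assume t: "t \<in> {0..1}"
  have "norm (complex_of_real (1 - t^2) powr w) = (1 - t^2) powr Re w"
    using norm_powr_real_powr[of "complex_of_real (1 - t^2)" w] one_minus_sq_nonneg[OF t] by simp
  then show ?thesis using t unfolding Kf_def Kr_def by (simp add: norm_mult norm_power)
qed

lemma Kf_of_real: "t \<in> {0..1} \<Longrightarrow> Kf j (of_real r) t = of_real (Kr j r t)"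
proof -
  assume t: "t \<in> {0..1}"
  have "complex_of_real (1 - t^2) powr (of_real r) = of_real ((1 - t^2) powr r)"
    by (rule powr_of_real) (rule one_minus_sq_nonneg[OF t])
  then show ?thesis unfolding Kf_def Kr_def by simp
qed

lemma Kr_int: "r > -1 \<Longrightarrow> Kr j r integrable_on {0..1}"
proof -
  assume r: "r > -1"
  have "Kf j (of_real r) integrable_on {0..1}" by (rule Kf_int_all) (use r in simp)
  then obtain I where "(Kf j (of_real r) has_integral I) {0..1}" by blast
  from has_integral_linear[OF this bounded_linear_Re]
  have "(Re \<circ> Kf j (of_real r)) integrable_on {0..1}" by blast
  then show ?thesis by (rule integrable_eq) (simp add: Kf_of_real)
qed

lemma norm_Kf_int: "Re w > -1 \<Longrightarrow> (\<lambda>t. norm (Kf j w t)) integrable_on {0..1}"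
  by (rule integrable_eq[OF Kr_int[of "Re w" j]]) (simp_all add: norm_Kf)

lemma Kr_le: "t \<in> {0..1} \<Longrightarrow> r \<le> r' \<Longrightarrow> Kr j r' t \<le> Kr 0 r t"
proof -
  assume t: "t \<in> {0..1}" and rr: "r \<le> r'"
  have s: "0 \<le> 1 - t^2" "1 - t^2 \<le> 1" using one_minus_sq_nonneg[OF t] by auto
  have "t ^ (2*j) \<le> 1" using t by (auto intro: power_le_one)
  moreover have "(1 - t^2) powr r' \<le> (1 - t^2) powr r" by (rule powr_mono'[OF rr s])
  ultimately have "t ^ (2*j) * (1 - t^2) powr r' \<le> 1 * (1 - t^2) powr r"
    by (intro mult_mono) auto
  then show ?thesis unfolding Kr_def by simp
qed

lemma summable_on_times:
  fixes f :: "'a \<Rightarrow> real" and g :: "'b \<Rightarrow> real"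
  assumes "f summable_on UNIV" "g summable_on UNIV" "\<And>a. f a \<ge> 0" "\<And>b. g b \<ge> 0"
  shows "(\<lambda>(a,b). f a * g b) summable_on UNIV"
proof -
  obtain G where G: "(g has_sum G) UNIV" using assms(2) by (auto simp: summable_on_def)
  have "(\<lambda>(a,b). f a * g b) summable_on Sigma UNIV (\<lambda>_. UNIV)"
  proof (rule summable_on_SigmaI[where g = "\<lambda>a. f a * G"])
    show "((\<lambda>y. (\<lambda>(a,b). f a * g b) (x, y)) has_sum f x * G) UNIV" for x
      using has_sum_cmult_right[OF G, of "f x"] by simp
    show "(\<lambda>a. f a * G) summable_on UNIV" using summable_on_cmult_left[OF assms(1)] by simp
    show "0 \<le> (\<lambda>(a,b). f a * g b) (x, y)" for x y using assms(3,4) by simp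
  qed
  then show ?thesis by simp
qed

lemma nat_summable_on: "summable (f :: nat \<Rightarrow> real) \<Longrightarrow> (\<And>n. f n \<ge> 0) \<Longrightarrow> f summable_on UNIV"
  by (rule summable_nonneg_imp_summable_on_strong) auto




lemma ratio_summable:
  fixes f :: "nat \<Rightarrow> complex"
  assumes B: "B \<ge> 0" and r: "\<And>n. n \<ge> 1 \<Longrightarrow> norm (f (Suc n)) \<le> B / (real n + 1) * norm (f n)"
  shows "summable (\<lambda>n. norm (f n))"
proof (rule summable_ratio_test[where c = "1/2" and N = "max 1 (nat \<lceil>2*B\<rceil>)"])
  fix n assume n: "n \<ge> max 1 (nat \<lceil>2*B\<rceil>)"
  have "2*B \<le> real n" using n by linarith
  then have "B / (real n + 1) \<le> 1/2" using B by (simp add: divide_le_eq)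
  then have b: "B / (real n + 1) * norm (f n) \<le> 1/2 * norm (f n)" by (rule mult_right_mono) simp
  have "n \<ge> 1" using n by simp
  from order_trans[OF r[OF this] b] show "norm (norm (f (Suc n))) \<le> 1/2 * norm (norm (f n))" by simp
qed simp

lemma norm_ge_Re_plus: "Re (z::complex) \<le> norm z"
  by (rule complex_Re_le_cmod)

lemma pk_Suc: "pk \<nu> (Suc k) = pk \<nu> k * ((\<nu> + 1 + of_nat k) * (\<nu>/2+1/4 + of_nat k) * (\<nu>/2+3/4 + of_nat k) * of_nat (Suc k))"
  unfolding pk_def by (simp add: pochhammer_rec' fact_Suc mult_ac)

lemma pk_nz: "Re \<nu> > -1/2 \<Longrightarrow> pk \<nu> k \<noteq> 0"
proof -
  assume nu: "Re \<nu> > -1/2"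
  have a1: "\<nu> + 1 \<notin> \<int>\<^sub>\<le>\<^sub>0" by (rule Re_pos_not_nonpos_Int) (use nu in simp)
  have a4: "\<nu>/2+1/4 \<notin> \<int>\<^sub>\<le>\<^sub>0" by (rule Re_pos_not_nonpos_Int) (use nu in simp)
  have a5: "\<nu>/2+3/4 \<notin> \<int>\<^sub>\<le>\<^sub>0" by (rule Re_pos_not_nonpos_Int) (use nu in simp)
  show ?thesis unfolding pk_def using a1 a4 a5 pochhammer_eq_0_imp_nonpos_Int by auto
qed

lemma ck_summable:
  assumes nu: "Re \<nu> > -1/2" and A: "A \<ge> 0"
  shows "summable (\<lambda>k. norm (of_real (A^k) / pk \<nu> k :: complex))"
proof (rule ratio_summable[OF A])
  fix n :: nat assume n: "n \<ge> 1"
  define D where "D = (\<nu> + 1 + of_nat n) * (\<nu>/2+1/4 + of_nat n) * (\<nu>/2+3/4 + of_nat n) * of_nat (Suc n)"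
  have d1: "norm (\<nu> + 1 + of_nat n) \<ge> 1" using norm_ge_Re_plus[of "\<nu> + 1 + of_nat n"] nu n by simp
  have d2: "norm (\<nu>/2+1/4 + of_nat n) \<ge> 1" using norm_ge_Re_plus[of "\<nu>/2+1/4 + of_nat n"] nu n by simp
  have d3: "norm (\<nu>/2+3/4 + of_nat n) \<ge> 1" using norm_ge_Re_plus[of "\<nu>/2+3/4 + of_nat n"] nu n by simp
  have d4: "norm (of_nat (Suc n) :: complex) = real n + 1" by (simp only: norm_of_nat)
  have "real n + 1 \<le> norm D"
  proof -
    have "1 * 1 * 1 * (real n + 1) \<le> norm (\<nu> + 1 + of_nat n) * norm (\<nu>/2+1/4 + of_nat n) * norm (\<nu>/2+3/4 + of_nat n) * (real n + 1)"
      using d1 d2 d3 by (intro mult_mono) auto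
    then show ?thesis unfolding D_def by (simp only: norm_mult d4) simp
  qed
  then have Dpos: "norm D > 0" by linarith
  have pkS: "pk \<nu> (Suc n) = pk \<nu> n * D" unfolding D_def by (rule pk_Suc)
  have "norm (of_real (A ^ Suc n) / pk \<nu> (Suc n) :: complex) = A / norm D * norm (of_real (A ^ n) / pk \<nu> n :: complex)"
    unfolding pkS using A by (simp add: norm_mult norm_divide norm_power)
  also have "\<dots> \<le> A / (real n + 1) * norm (of_real (A ^ n) / pk \<nu> n :: complex)"
    by (intro mult_right_mono divide_left_mono) (use A Dpos \<open>real n + 1 \<le> norm D\<close> in auto)
  finally show "norm (of_real (A ^ Suc n) / pk \<nu> (Suc n) :: complex) \<le> A / (real n + 1) * norm (of_real (A ^ n) / pk \<nu> n :: complex)" .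
qed

lemma al_summable:
  assumes nu: "Re \<nu> > -1/2"
  shows "summable (\<lambda>m. norm (al \<nu> u m))"
proof (rule ratio_summable[where B = "2 * u^2"])
  show "0 \<le> 2 * u^2" by simp
  fix n :: nat assume n: "n \<ge> 1"
  define z where "z = of_nat n + \<nu> + 1"
  have nz: "z \<notin> \<int>\<^sub>\<le>\<^sub>0" unfolding z_def by (rule Re_pos_not_nonpos_Int) (use nu in simp)
  have g: "Gamma (of_nat (Suc n) + \<nu> + 1) = z * Gamma z"
    using Gamma_plus1[OF nz] unfolding z_def by (simp add: add_ac)
  have zn: "norm z \<ge> 1/2" using norm_ge_Re_plus[of z] nu unfolding z_def by simp
  have gz: "Gamma (of_nat n + \<nu> + 1) = Gamma z" by (simp add: z_def)
  have "al \<nu> u (Suc n) = al \<nu> u n * (- of_real (u^2) / (of_nat (Suc n) * z))"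
    unfolding al_def g gz by (simp add: field_simps power_add power_mult_distrib power2_eq_square)
  moreover have nu2: "norm ((complex_of_real u)^2) = u^2" by (simp add: norm_power)
  moreover have n1: "norm (1 + complex_of_nat n) = real n + 1"
  proof -
    have "(1 + complex_of_nat n) = complex_of_real (real n + 1)" by simp
    then show ?thesis by (simp only: norm_of_real)
  qed
  ultimately have "norm (al \<nu> u (Suc n)) = norm (al \<nu> u n) * (u^2 / ((real n + 1) * norm z))"
    by (simp add: norm_mult norm_divide)
  also have "\<dots> \<le> norm (al \<nu> u n) * (2 * u^2 / (real n + 1))"
  proof (rule mult_left_mono)
    have "u^2 / ((real n + 1) * norm z) = (u^2 / (real n + 1)) / norm z" by simp
    also have "\<dots> \<le> (u^2 / (real n + 1)) / (1/2)"
      by (rule divide_left_mono) (use zn in auto)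
    finally show "u^2 / ((real n + 1) * norm z) \<le> 2 * u^2 / (real n + 1)" by (simp add: mult.commute)
  qed simp
  finally show "norm (al \<nu> u (Suc n)) \<le> 2 * u^2 / (real n + 1) * norm (al \<nu> u n)" by (simp add: mult_ac)
qed

lemma cos_coeff_summable:
  fixes C :: real
  shows "summable (\<lambda>j. norm ((-1)^j * complex_of_real (C^(2*j)) / fact (2*j)))"
proof (rule summable_comparison_test'[where N = 0])
  show "summable (\<lambda>j. inverse (fact j) * (C^2)^j)" by (rule summable_exp)
  fix j :: nat
  have "fact j \<le> (fact (2*j) :: real)" by (rule fact_mono) simp
  then have "C^(2*j) / fact (2*j) \<le> C^(2*j) / fact j"
    by (intro divide_left_mono) (auto simp: power_mult)
  then have ineq: "C^(2*j) / fact (2*j) \<le> (C^2)^j / fact j" by (simp add: power_mult)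
  have c0: "0 \<le> C^(2*j)" by (simp add: power_mult)
  have e: "norm ((-1)^j * complex_of_real (C^(2*j)) / fact (2*j)) = C^(2*j) / fact (2*j)"
    using c0 by (simp add: norm_mult norm_divide norm_power power_mult power2_abs)
  show "norm (norm ((-1)^j * complex_of_real (C^(2*j)) / fact (2*j))) \<le> inverse (fact j) * (C^2)^j"
  proof -
    have nn: "0 \<le> C^(2*j) / fact (2*j)" using c0 by simp
    show ?thesis unfolding real_norm_def e abs_of_nonneg[OF nn] using ineq by (simp add: divide_inverse mult.commute)
  qed
qed




context
  fixes \<nu> :: complex and a b x :: real
  assumes nu: "Re \<nu> > -1/2" and ap: "a > 0" and bp: "b > 0" and xp: "x > 0"
begin

definition CC :: real where "CC = x * sqrt (a^2 + b^2)"
definition AA :: real where "AA = a^2 * b^2 * x^4 / 64"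
definition cjc :: "nat \<Rightarrow> complex" where "cjc j = (-1)^j * complex_of_real (CC^(2*j)) / fact (2*j)"
definition ck :: "nat \<Rightarrow> complex" where "ck k = complex_of_real (AA^k) / pk \<nu> k"
definition NN :: "real \<Rightarrow> real" where "NN = Kr 0 (Re \<nu> - 1/2)"
definition NI :: real where "NI = integral {0..1} NN"
definition hk :: "nat \<Rightarrow> real \<Rightarrow> complex" where
  "hk k t = ck k * Kf 0 (wk \<nu> k) t * complex_of_real (cos (CC * t))"
definition VV :: "nat \<Rightarrow> nat \<Rightarrow> complex" where "VV j k = cjc j * ck k * KI j (wk \<nu> k)"
definition fI :: "real \<Rightarrow> complex" where
  "fI t = (of_real (1 - t^2)) powr (\<nu> - 1/2) * of_real (cos (x * t * sqrt (a^2 + b^2))) *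
       hyp0F3 (\<nu> + 1) (\<nu> / 2 + 1/4) (\<nu> / 2 + 3/4)
              (of_real (a^2 * b^2 * x^4 * (1 - t^2)^2 / 64))"

lemma wk_re: "Re (wk \<nu> k) > -1" "Re \<nu> - 1/2 \<le> Re (wk \<nu> k)"
  using nu unfolding wk_def by auto

lemma NN_int: "NN integrable_on {0..1}"
  unfolding NN_def by (rule Kr_int) (use nu in simp)

lemma NN_has: "(NN has_integral NI) {0..1}"
  unfolding NI_def using NN_int by (rule integrable_integral)

lemma NN_nonneg: "0 \<le> NN t"
  unfolding NN_def Kr_def by simp

lemma Kf_le_NN: "t \<in> {0..1} \<Longrightarrow> norm (Kf j (wk \<nu> k) t) \<le> NN t"
  unfolding NN_def using Kr_le[of t "Re \<nu> - 1/2" "Re (wk \<nu> k)" j] wk_re(2)[of k]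
  by (simp add: norm_Kf)

lemma KI_bound: "norm (KI j (wk \<nu> k)) \<le> NI"
proof -
  have h: "(Kf j (wk \<nu> k) has_integral KI j (wk \<nu> k)) {0..1}"
    unfolding KI_def by (rule Kf_integral) (rule wk_re)
  have "norm (integral {0..1} (Kf j (wk \<nu> k))) \<le> integral {0..1} NN"
    by (rule integral_norm_bound_integral) (use h NN_int Kf_le_NN in auto)
  then show ?thesis using h unfolding NI_def by (simp add: integral_unique)
qed

lemma AA_nonneg: "AA \<ge> 0" unfolding AA_def by simp

lemma ck_summ: "summable (\<lambda>k. norm (ck k))"
  unfolding ck_def by (rule ck_summable[OF nu AA_nonneg])

lemma cj_summ: "summable (\<lambda>j. norm (cjc j))"
  unfolding cjc_def by (rule cos_coeff_summable)

lemma Kf_split: "Kf j w t = complex_of_real t ^ (2*j) * Kf 0 w t"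
  unfolding Kf_def by simp

lemma inner:
  shows "(hk k has_integral (\<Sum>j. VV j k)) {0..1}" and "summable (\<lambda>j. VV j k)"
proof -
  define g where "g = (\<lambda>j t. cjc j * ck k * Kf j (wk \<nu> k) t)"
  define G where "G = (\<lambda>j t. norm (cjc j) * norm (ck k) * NN t)"
  have gi: "(g j has_integral VV j k) {0..1}" for j
  proof -
    have h: "(Kf j (wk \<nu> k) has_integral KI j (wk \<nu> k)) {0..1}"
      unfolding KI_def by (rule Kf_integral) (rule wk_re)
    show ?thesis unfolding g_def VV_def using has_integral_mult_right[OF h, of "cjc j * ck k"] by simp
  qed
  have Gh: "(G j has_integral (norm (cjc j) * norm (ck k) * NI)) {0..1}" for j
    unfolding G_def using has_integral_mult_right[OF NN_has, of "norm (cjc j) * norm (ck k)"] by simp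
  have Gi: "G j integrable_on {0..1}" for j using Gh by blast
  have gG: "norm (g j t) \<le> G j t" if "t \<in> {0..1}" for j t
    unfolding g_def G_def norm_mult using Kf_le_NN[OF that, of j k]
    by (intro mult_left_mono) auto
  have sG: "summable (\<lambda>j. integral {0..1} (G j))"
  proof -
    have iG: "integral {0..1} (G j) = norm (cjc j) * (norm (ck k) * NI)" for j
      using integral_unique[OF Gh[of j]] by (simp add: mult_ac)
    show ?thesis unfolding iG by (rule summable_mult2[OF cj_summ])
  qed
  have sGt: "summable (\<lambda>j. G j t)" for t
    unfolding G_def using summable_mult2[OF cj_summ, of "norm (ck k) * NN t"] by (simp add: mult_ac)
  have sf: "(\<lambda>j. g j t) sums hk k t" if "t \<in> {0..1}" for t
  proof -
    have c: "cjc j * complex_of_real t ^ (2*j) = complex_of_real ((-1)^j / fact (2*j) * (CC*t)^(2*j))" for j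
      unfolding cjc_def by (simp add: power_mult_distrib field_simps)
    have "(\<lambda>j. complex_of_real ((-1)^j / fact (2*j) * (CC*t)^(2*j))) sums complex_of_real (cos (CC*t))"
      by (rule sums_of_real[OF cos_paired])
    then have "(\<lambda>j. cjc j * complex_of_real t ^ (2*j)) sums complex_of_real (cos (CC*t))"
      unfolding c .
    from sums_mult[OF this, of "ck k * Kf 0 (wk \<nu> k) t"]
    show ?thesis unfolding g_def hk_def by (subst Kf_split) (simp add: mult_ac)
  qed
  show "summable (\<lambda>j. VV j k)" and "(hk k has_integral (\<Sum>j. VV j k)) {0..1}"
    using XCH[OF gi Gi gG sG sGt sf] by auto
qed

lemma hk_at_1: "hk k 1 = 0"
  unfolding hk_def Kf_def by simp

lemma fI_at_1: "fI 1 = 0"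
  unfolding fI_def by simp

lemma outer: "(fI has_integral (\<Sum>k. \<Sum>j. VV j k)) {0..1}"
proof -
  define G where "G = (\<lambda>k t. norm (ck k) * NN t)"
  have Gh: "(G k has_integral (norm (ck k) * NI)) {0..1}" for k
    unfolding G_def using has_integral_mult_right[OF NN_has, of "norm (ck k)"] by simp
  have Gi: "G k integrable_on {0..1}" for k using Gh by blast
  have gG: "norm (hk k t) \<le> G k t" if "t \<in> {0..1}" for k t
  proof -
    have "norm (hk k t) = norm (ck k) * norm (Kf 0 (wk \<nu> k) t) * \<bar>cos (CC * t)\<bar>"
      unfolding hk_def by (simp add: norm_mult)
    also have "\<dots> \<le> norm (ck k) * NN t * 1"
      by (intro mult_mono mult_left_mono Kf_le_NN that) (auto simp: NN_nonneg)
    finally show ?thesis unfolding G_def by simp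
  qed
  have sG: "summable (\<lambda>k. integral {0..1} (G k))"
  proof -
    have iG: "integral {0..1} (G k) = norm (ck k) * NI" for k
      using integral_unique[OF Gh[of k]] .
    show ?thesis unfolding iG by (rule summable_mult2[OF ck_summ])
  qed
  have sGt: "summable (\<lambda>k. G k t)" for t
    unfolding G_def by (rule summable_mult2[OF ck_summ])
  have sf: "(\<lambda>k. hk k t) sums fI t" if t: "t \<in> {0..1}" for t
  proof (cases "t = 1")
    case True
    then show ?thesis using hk_at_1 fI_at_1 by simp
  next
    case False
    have "t^2 < 1" using t False by (simp add: abs_square_less_1)
    then have s1: "1 - t^2 \<noteq> 0" "0 \<le> 1 - t^2" "1 - t^2 \<le> 1" using t by auto
    define s where "s = complex_of_real (1 - t^2)"
    have s0: "s \<noteq> 0" unfolding s_def using s1(1) by (metis of_real_eq_0_iff)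
    define z where "z = complex_of_real (a^2 * b^2 * x^4 * (1 - t^2)^2 / 64)"
    have z': "z = complex_of_real AA * s^2" unfolding z_def s_def AA_def by simp
    have zk: "z^k = complex_of_real (AA^k) * s^(2*k)" for k
      unfolding z' by (simp add: power_mult_distrib power_mult)
    have ke: "ck k * Kf 0 (wk \<nu> k) t = s powr (\<nu> - 1/2) * (z^k / pk \<nu> k)" for k
    proof -
      have "Kf 0 (wk \<nu> k) t = s powr (\<nu> - 1/2) * s powr (of_nat (2*k))"
        unfolding Kf_def wk_def s_def[symmetric] by (simp add: powr_add)
      also have "s powr (of_nat (2*k)) = s^(2*k)" using powr_nat'[of s "2*k"] s0 by simp
      finally show ?thesis unfolding ck_def zk by (simp add: field_simps)
    qed
    have zb: "norm z \<le> AA"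
    proof -
      have "(1 - t^2)^2 \<le> 1" using s1 by (simp add: power_le_one)
      then have le: "a^2 * b^2 * x^4 * (1 - t^2)^2 / 64 \<le> a^2 * b^2 * x^4 * 1 / 64"
        by (intro divide_right_mono mult_left_mono) auto
      have nn: "0 \<le> a^2 * b^2 * x^4 * (1 - t^2)^2 / 64" by simp
      show ?thesis unfolding z_def norm_of_real abs_of_nonneg[OF nn] AA_def using le by simp
    qed
    have hs: "(\<lambda>k. z^k / pk \<nu> k) sums hyp0F3 (\<nu> + 1) (\<nu> / 2 + 1/4) (\<nu> / 2 + 3/4) z"
    proof -
      have "summable (\<lambda>k. z^k / pk \<nu> k)"
      proof (rule summable_comparison_test'[OF ck_summ])
        fix k :: nat
        have "norm (z^k / pk \<nu> k) = norm z ^ k / norm (pk \<nu> k)" by (simp add: norm_divide norm_power)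
        also have "\<dots> \<le> AA ^ k / norm (pk \<nu> k)"
          by (intro divide_right_mono power_mono zb) auto
        also have "\<dots> = norm (ck k)" unfolding ck_def using AA_nonneg by (simp add: norm_divide norm_power)
        finally show "norm (z^k / pk \<nu> k) \<le> norm (ck k)" .
      qed
      then show ?thesis unfolding hyp0F3_def pk_def by (rule summable_sums)
    qed
    have cc: "cos (x * t * sqrt (a^2 + b^2)) = cos (CC * t)" unfolding CC_def by (simp add: mult_ac)
    have hk_eq: "(\<lambda>k. hk k t) = (\<lambda>k. (s powr (\<nu> - 1/2) * complex_of_real (cos (CC * t))) * (z^k / pk \<nu> k))"
      unfolding hk_def ke by (simp only: mult_ac)
    have fe: "fI t = (s powr (\<nu> - 1/2) * complex_of_real (cos (CC * t))) * hyp0F3 (\<nu> + 1) (\<nu> / 2 + 1/4) (\<nu> / 2 + 3/4) z"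
      unfolding fI_def s_def[symmetric] z_def[symmetric] cc ..
    show ?thesis unfolding hk_eq fe by (rule sums_mult[OF hs])
  qed
  show ?thesis using XCH(1)[OF inner(1) Gi gG sG sGt sf] .
qed


definition uu :: real where "uu = a*x/2"
definition vv :: real where "vv = b*x/2"
definition K0c :: complex where "K0c = 2 * of_real 4 powr \<nu> / (of_real pi * Gamma (2*\<nu>+1))"

lemma uu_pos: "uu > 0" unfolding uu_def using ap xp by simp
lemma vv_pos: "vv > 0" unfolding vv_def using bp xp by simp

lemma AA_uv: "AA = uu^2 * vv^2 / 4"
  unfolding AA_def uu_def vv_def by (simp add: power_mult_distrib field_simps)

lemma CC2: "CC^2 = 4 * (uu^2 + vv^2)"
  unfolding CC_def uu_def vv_def by (simp add: power_mult_distrib field_simps)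

lemma cjc_expand:
  "cjc j = (\<Sum>p\<le>j. (-1)^j * 4^j * of_nat (j choose p) * of_real (uu^(2*p) * vv^(2*(j-p))) / fact (2*j))"
proof -
  have r: "CC^(2*j) = 4^j * (\<Sum>p\<le>j. real (j choose p) * (uu^(2*p) * vv^(2*(j-p))))"
  proof -
    have "CC^(2*j) = (CC^2)^j" by (simp add: power_mult)
    also have "\<dots> = 4^j * (uu^2 + vv^2)^j" unfolding CC2 by (simp only: power_mult_distrib)
    also have "(uu^2 + vv^2)^j = (\<Sum>p\<le>j. real (j choose p) * (uu^2)^p * (vv^2)^(j-p))"
      by (rule binomial_ring)
    finally show ?thesis by (simp only: power_mult[symmetric] mult.assoc)
  qed
  have "cjc j = (-1)^j * 4^j * (\<Sum>p\<le>j. of_nat (j choose p) * of_real (uu^(2*p) * vv^(2*(j-p)))) / fact (2*j)"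
    unfolding cjc_def r by simp
  also have "\<dots> = (\<Sum>p\<le>j. (-1)^j * 4^j * of_nat (j choose p) * of_real (uu^(2*p) * vv^(2*(j-p))) / fact (2*j))"
    by (simp add: sum_distrib_left sum_divide_distrib mult_ac)
  finally show ?thesis .
qed

lemma ck_uv: "ck k = of_real ((uu^2 * vv^2 / 4)^k) / pk \<nu> k"
  unfolding ck_def AA_uv ..

lemma VV_Wt: "K0c * VV j k = (\<Sum>p\<le>j. Wt \<nu> uu vv (k, p, j-p))"
proof -
  have "K0c * VV j k = (\<Sum>p\<le>j. K0c * ((-1)^j * 4^j * of_nat (j choose p) * of_real (uu^(2*p) * vv^(2*(j-p))) / fact (2*j)) * ck k * KI j (wk \<nu> k))"
    unfolding VV_def cjc_expand by (simp add: sum_distrib_left sum_distrib_right mult_ac)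
  also have "\<dots> = (\<Sum>p\<le>j. Wt \<nu> uu vv (k, p, j-p))"
  proof (rule sum.cong)
    fix p assume p: "p \<in> {..j}"
    then have e: "p + (j - p) = j" by simp
    have "K0c * ((-1)^(p+(j-p)) * 4^(p+(j-p)) * of_nat ((p+(j-p)) choose p) * of_real (uu^(2*p) * vv^(2*(j-p))) / fact (2*(p+(j-p)))) *
          (of_real ((uu^2 * vv^2 / 4)^k) / pk \<nu> k) * KI (p+(j-p)) (wk \<nu> k) = Wt \<nu> uu vv (k, p, j-p)"
      unfolding K0c_def by (rule TERM[OF nu])
    then show "K0c * ((-1)^j * 4^j * of_nat (j choose p) * of_real (uu^(2*p) * vv^(2*(j-p))) / fact (2*j)) * ck k * KI j (wk \<nu> k) = Wt \<nu> uu vv (k, p, j-p)"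
      unfolding e ck_uv .
  qed simp
  finally show ?thesis .
qed


lemma pow_swap2: "((w::real)^p)^2 = (w^2)^p"
  by (metis power_mult mult.commute)

lemma cp_bound:
  fixes u v :: real
  shows "norm ((-1)^(p+q) * 4^(p+q) * of_nat ((p+q) choose p) * complex_of_real (u^(2*p) * v^(2*q)) / fact (2*(p+q)))
         \<le> ((4*u^2)^p / fact p) * ((4* v^2)^q / fact q)"
proof -
  have b: "real ((p+q) choose p) = fact (p+q) / (fact p * fact q)"
    using binomial_fact[of p "p+q"] by simp
  have f: "fact (p+q) / fact (2*(p+q)) \<le> (1::real)"
    by (simp add: fact_mono)
  have nn: "0 \<le> u^(2*p) * v^(2*q)" by (simp add: power_mult)
  have "norm ((-1)^(p+q) * 4^(p+q) * of_nat ((p+q) choose p) * complex_of_real (u^(2*p) * v^(2*q)) / fact (2*(p+q)))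
        = 4^(p+q) * real ((p+q) choose p) * (u^(2*p) * v^(2*q)) / fact (2*(p+q))"
    using nn by (simp add: norm_mult norm_divide norm_power power_mult power2_abs)
  also have "\<dots> = ((4*u^2)^p / fact p) * ((4* v^2)^q / fact q) * (fact (p+q) / fact (2*(p+q)))"
    unfolding b by (simp add: power_mult_distrib power_add power_mult field_simps pow_swap2)
  also have "\<dots> \<le> ((4*u^2)^p / fact p) * ((4* v^2)^q / fact q) * 1"
    by (intro mult_left_mono f) simp
  finally show ?thesis by simp
qed

lemma Wt_bound:
  "norm (Wt \<nu> uu vv (k,p,q)) \<le> norm K0c * NI * norm (ck k) * (((4*uu^2)^p / fact p) * ((4* vv^2)^q / fact q))"
proof -
  have e: "Wt \<nu> uu vv (k,p,q) = K0c * ((-1)^(p+q) * 4^(p+q) * of_nat ((p+q) choose p) * complex_of_real (uu^(2*p) * vv^(2*q)) / fact (2*(p+q))) * ck k * KI (p+q) (wk \<nu> k)"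
    unfolding K0c_def ck_uv by (rule TERM[OF nu, symmetric])
  have "norm (Wt \<nu> uu vv (k,p,q)) = norm K0c * norm ((-1)^(p+q) * 4^(p+q) * of_nat ((p+q) choose p) * complex_of_real (uu^(2*p) * vv^(2*q)) / fact (2*(p+q))) * norm (ck k) * norm (KI (p+q) (wk \<nu> k))"
    unfolding e by (simp only: norm_mult norm_divide)
  also have "\<dots> \<le> norm K0c * (((4*uu^2)^p / fact p) * ((4* vv^2)^q / fact q)) * norm (ck k) * NI"
    by (intro mult_mono cp_bound KI_bound) auto
  finally show ?thesis by (simp add: mult_ac)
qed

lemma exp_coeff_summable_on: "(\<lambda>p. (c::real)^p / fact p) summable_on UNIV" if "c \<ge> 0"
proof (rule nat_summable_on)
  show "summable (\<lambda>p. c^p / fact p)" using summable_exp[of c] by (simp add: divide_inverse mult.commute)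
  show "0 \<le> c^p / fact p" for p using that by simp
qed

lemma Wt_abs: "(\<lambda>i. norm (Wt \<nu> uu vv i)) summable_on UNIV"
proof -
  define B where "B = (\<lambda>(k::nat,p::nat,q::nat). norm K0c * NI * norm (ck k) * (((4*uu^2)^p / fact p) * ((4* vv^2)^q / fact q)))"
  have NI0: "0 \<le> NI" unfolding NI_def by (rule integral_nonneg[OF NN_int]) (simp add: NN_nonneg)
  have e1: "(\<lambda>p. (4*uu^2)^p / fact p) summable_on UNIV" by (rule exp_coeff_summable_on) simp
  have e2: "(\<lambda>q. (4* vv^2)^q / fact q) summable_on UNIV" by (rule exp_coeff_summable_on) simp
  have s1: "(\<lambda>(p,q). ((4*uu^2)^p / fact p) * ((4* vv^2)^q / fact q)) summable_on UNIV"
    by (rule summable_on_times[OF e1 e2]) auto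
  have s2: "(\<lambda>(k,pq). norm (ck k) * (case pq of (p,q) \<Rightarrow> ((4*uu^2)^p / fact p) * ((4* vv^2)^q / fact q))) summable_on UNIV"
    by (rule summable_on_times[OF nat_summable_on[OF ck_summ] s1]) auto
  have "B summable_on UNIV"
  proof -
    have "(\<lambda>i. (norm K0c * NI) * (case i of (k,pq) \<Rightarrow> norm (ck k) * (case pq of (p,q) \<Rightarrow> ((4*uu^2)^p / fact p) * ((4* vv^2)^q / fact q)))) summable_on UNIV"
      using summable_on_cmult_right[OF s2] by simp
    moreover have "(\<lambda>i. (norm K0c * NI) * (case i of (k,pq) \<Rightarrow> norm (ck k) * (case pq of (p,q) \<Rightarrow> ((4*uu^2)^p / fact p) * ((4* vv^2)^q / fact q)))) = B"
      unfolding B_def by (auto simp: fun_eq_iff mult_ac)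
    ultimately show ?thesis by simp
  qed
  then show ?thesis
  proof (rule Infinite_Sum.abs_summable_on_comparison_test')
    fix i :: "nat \<times> nat \<times> nat"
    obtain k p q where i: "i = (k,p,q)" by (cases i) auto
    show "norm (Wt \<nu> uu vv i) \<le> B i" unfolding i B_def using Wt_bound by simp
  qed
qed

lemma Wt_summable: "Wt \<nu> uu vv summable_on UNIV"
  using Wt_abs by (rule abs_summable_summable)

definition TT :: complex where "TT = infsum (Wt \<nu> uu vv) UNIV"

lemma TT_has: "(Wt \<nu> uu vv has_sum TT) UNIV"
  unfolding TT_def using Wt_summable by (rule has_sum_infsum)

lemma regroupA: "((\<lambda>(m,n). al \<nu> uu m * al \<nu> vv n) has_sum TT) UNIV"
proof -
  define h where "h = (\<lambda>((m::nat,n::nat),k::nat). Wt \<nu> uu vv (k, m-k, n-k))"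
  have "(h has_sum TT) (Sigma UNIV (\<lambda>(m,n). {..min m n}))"
  proof -
    have "(Wt \<nu> uu vv has_sum TT) UNIV = (h has_sum TT) (Sigma UNIV (\<lambda>(m,n). {..min m n}))"
      by (rule has_sum_reindex_bij_witness[where i = "\<lambda>((m,n),k). (k, m-k, n-k)" and j = "\<lambda>(k,p,q). ((k+p, k+q), k)"])
         (auto simp: h_def)
    then show ?thesis using TT_has by simp
  qed
  then have "((\<lambda>(m,n). \<Sum>k\<le>min m n. Wt \<nu> uu vv (k, m-k, n-k)) has_sum TT) UNIV"
  proof (rule has_sum_Sigma')
    fix mn :: "nat \<times> nat" assume "mn \<in> UNIV"
    obtain m n where mn: "mn = (m,n)" by (cases mn) auto
    show "((\<lambda>k. h (mn, k)) has_sum (case mn of (m,n) \<Rightarrow> \<Sum>k\<le>min m n. Wt \<nu> uu vv (k, m-k, n-k))) (case mn of (m,n) \<Rightarrow> {..min m n})"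
      unfolding mn h_def by (simp add: has_sum_finite)
  qed
  then show ?thesis using al_mult_Wt[OF nu] by (simp add: case_prod_beta)
qed

lemma al_sums_has: "((\<lambda>m. al \<nu> w m) has_sum (\<Sum>m. al \<nu> w m)) UNIV"
proof -
  have s: "summable (\<lambda>m. norm (al \<nu> w m))" by (rule al_summable[OF nu])
  show ?thesis by (rule norm_summable_imp_has_sum[OF s summable_sums[OF summable_norm_cancel[OF s]]])
qed

lemma TT_LHS: "TT = (\<Sum>m. al \<nu> uu m) * (\<Sum>n. al \<nu> vv n)"
proof -
  define SA where "SA = (\<Sum>m. al \<nu> uu m)"
  define SB where "SB = (\<Sum>n. al \<nu> vv n)"
  have hA: "((\<lambda>m. al \<nu> uu m) has_sum SA) UNIV" unfolding SA_def by (rule al_sums_has)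
  have hB: "((\<lambda>n. al \<nu> vv n) has_sum SB) UNIV" unfolding SB_def by (rule al_sums_has)
  have "((\<lambda>(m,n). al \<nu> uu m * al \<nu> vv n) has_sum TT) (Sigma UNIV (\<lambda>_. UNIV))"
    using regroupA by simp
  then have "((\<lambda>m. al \<nu> uu m * SB) has_sum TT) UNIV"
  proof (rule has_sum_Sigma')
    fix m :: nat assume "m \<in> UNIV"
    show "((\<lambda>n. (\<lambda>(m,n). al \<nu> uu m * al \<nu> vv n) (m, n)) has_sum al \<nu> uu m * SB) UNIV"
      using has_sum_cmult_right[OF hB, of "al \<nu> uu m"] by simp
  qed
  moreover have "((\<lambda>m. al \<nu> uu m * SB) has_sum SA * SB) UNIV"
    by (rule has_sum_cmult_left[OF hA])
  ultimately show ?thesis unfolding SA_def SB_def using has_sum_unique by blast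
qed

lemma VV_norm_summable: "summable (\<lambda>j. norm (VV j k))"
proof (rule summable_comparison_test'[where N = 0])
  show "summable (\<lambda>j. norm (cjc j) * (norm (ck k) * NI))" by (rule summable_mult2[OF cj_summ])
  fix j :: nat
  have "norm (VV j k) = norm (cjc j) * (norm (ck k) * norm (KI j (wk \<nu> k)))"
    unfolding VV_def by (simp add: norm_mult)
  also have "\<dots> \<le> norm (cjc j) * (norm (ck k) * NI)"
    by (intro mult_left_mono KI_bound) auto
  finally show "norm (norm (VV j k)) \<le> norm (cjc j) * (norm (ck k) * NI)" by simp
qed

lemma regroupB: "((\<lambda>(k,j). K0c * VV j k) has_sum TT) UNIV"
proof -
  define h where "h = (\<lambda>((k::nat,j::nat),p::nat). Wt \<nu> uu vv (k, p, j-p))"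
  have "(h has_sum TT) (Sigma UNIV (\<lambda>(k,j). {..j}))"
  proof -
    have "(Wt \<nu> uu vv has_sum TT) UNIV = (h has_sum TT) (Sigma UNIV (\<lambda>(k,j). {..j}))"
      by (rule has_sum_reindex_bij_witness[where i = "\<lambda>((k,j),p). (k, p, j-p)" and j = "\<lambda>(k,p,q). ((k, p+q), p)"])
         (auto simp: h_def)
    then show ?thesis using TT_has by simp
  qed
  then have "((\<lambda>(k,j). \<Sum>p\<le>j. Wt \<nu> uu vv (k, p, j-p)) has_sum TT) UNIV"
  proof (rule has_sum_Sigma')
    fix kj :: "nat \<times> nat" assume "kj \<in> UNIV"
    obtain k j where kj: "kj = (k,j)" by (cases kj) auto
    show "((\<lambda>p. h (kj, p)) has_sum (case kj of (k,j) \<Rightarrow> \<Sum>p\<le>j. Wt \<nu> uu vv (k, p, j-p))) (case kj of (k,j) \<Rightarrow> {..j})"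
      unfolding kj h_def by (simp add: has_sum_finite)
  qed
  then show ?thesis using VV_Wt by (simp add: case_prod_beta)
qed

lemma K0c_nz: "K0c \<noteq> 0"
proof -
  have "2*\<nu>+1 \<notin> \<int>\<^sub>\<le>\<^sub>0" by (rule Re_pos_not_nonpos_Int) (use nu in simp)
  then have "Gamma (2*\<nu>+1) \<noteq> 0" by (simp add: Gamma_eq_zero_iff)
  then show ?thesis unfolding K0c_def by (simp add: powr_def)
qed

lemma TT_RHS: "(\<Sum>k. \<Sum>j. VV j k) = TT / K0c"
proof -
  have "((\<lambda>(k,j). K0c * VV j k) has_sum TT) (Sigma UNIV (\<lambda>_. UNIV))"
    using regroupB by simp
  then have hs: "((\<lambda>k. K0c * (\<Sum>j. VV j k)) has_sum TT) UNIV"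
  proof (rule has_sum_Sigma')
    fix k :: nat assume "k \<in> UNIV"
    have s: "summable (\<lambda>j. norm (VV j k))" by (rule VV_norm_summable)
    have "((\<lambda>j. VV j k) has_sum (\<Sum>j. VV j k)) UNIV"
      by (rule norm_summable_imp_has_sum[OF s summable_sums[OF summable_norm_cancel[OF s]]])
    from has_sum_cmult_right[OF this, of K0c]
    show "((\<lambda>j. (\<lambda>(k,j). K0c * VV j k) (k, j)) has_sum K0c * (\<Sum>j. VV j k)) UNIV" by simp
  qed
  then have "(\<lambda>k. K0c * (\<Sum>j. VV j k)) sums TT" by (rule has_sum_imp_sums)
  from sums_mult[OF this, of "inverse K0c"]
  have "(\<lambda>k. (\<Sum>j. VV j k)) sums (inverse K0c * TT)" using K0c_nz by (simp add: mult.assoc[symmetric])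
  then show ?thesis by (simp add: sums_iff divide_inverse mult.commute)
qed


lemma fI_integral: "integral {0..1} fI = TT / K0c"
  using outer TT_RHS by (simp add: integral_unique)

lemma powr_abx: "complex_of_real (a * b * x^2) powr \<nu> = complex_of_real 4 powr \<nu> * (complex_of_real uu powr \<nu> * complex_of_real vv powr \<nu>)"
proof -
  have e: "complex_of_real (a * b * x^2) = complex_of_real 4 * (complex_of_real uu * complex_of_real vv)"
    unfolding uu_def vv_def by (simp add: power2_eq_square)
  have "(complex_of_real 4 * (complex_of_real uu * complex_of_real vv)) powr \<nu> =
        complex_of_real 4 powr \<nu> * (complex_of_real uu * complex_of_real vv) powr \<nu>"
    by (rule powr_times_real) (use uu_pos vv_pos in auto)
  also have "(complex_of_real uu * complex_of_real vv) powr \<nu> = complex_of_real uu powr \<nu> * complex_of_real vv powr \<nu>"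
    by (rule powr_times_real) (use uu_pos vv_pos in auto)
  finally show ?thesis unfolding e .
qed

lemma besselJ_al: "besselJ \<nu> (complex_of_real (2*w)) = complex_of_real w powr \<nu> * (\<Sum>m. al \<nu> w m)" if w: "w > 0" for w
proof -
  have wne: "complex_of_real w \<noteq> 0" using w by simp
  have t: "(-1)^k * (complex_of_real (2*w) / 2) powr (2 * of_nat k + \<nu>) / (fact k * Gamma (of_nat k + \<nu> + 1))
           = complex_of_real w powr \<nu> * al \<nu> w k" for k
  proof -
    have "complex_of_real (2*w) / 2 = complex_of_real w" by simp
    moreover have "complex_of_real w powr (2 * of_nat k + \<nu>) = complex_of_real w ^ (2*k) * complex_of_real w powr \<nu>"
    proof -
      have "complex_of_real w powr (2 * of_nat k + \<nu>) = complex_of_real w powr (of_nat (2*k)) * complex_of_real w powr \<nu>"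
        by (simp add: powr_add)
      also have "complex_of_real w powr (of_nat (2*k)) = complex_of_real w ^ (2*k)"
        using powr_nat'[of "complex_of_real w" "2*k"] wne by simp
      finally show ?thesis .
    qed
    ultimately show ?thesis unfolding al_def by (simp add: field_simps)
  qed
  have s: "summable (\<lambda>m. al \<nu> w m)" using al_summable[OF nu, of w] by (rule summable_norm_cancel)
  show ?thesis unfolding besselJ_def t using suminf_mult[OF s] by simp
qed

lemma main_ctx:
  "besselJ \<nu> (of_real (a * x)) * besselJ \<nu> (of_real (b * x)) =
    2 / (of_real pi * Gamma (2 * \<nu> + 1)) * (of_real (a * b * x^2)) powr \<nu> *
    integral {0..1} (\<lambda>t::real.
       (of_real (1 - t^2)) powr (\<nu> - 1/2) * of_real (cos (x * t * sqrt (a^2 + b^2))) *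
       hyp0F3 (\<nu> + 1) (\<nu> / 2 + 1/4) (\<nu> / 2 + 3/4)
              (of_real (a^2 * b^2 * x^4 * (1 - t^2)^2 / 64)))"
proof -
  have ia: "a * x = 2 * uu" unfolding uu_def by simp
  have ib: "b * x = 2 * vv" unfolding vv_def by simp
  have fI_eq: "(\<lambda>t::real.
       (of_real (1 - t^2)) powr (\<nu> - 1/2) * of_real (cos (x * t * sqrt (a^2 + b^2))) *
       hyp0F3 (\<nu> + 1) (\<nu> / 2 + 1/4) (\<nu> / 2 + 3/4)
              (of_real (a^2 * b^2 * x^4 * (1 - t^2)^2 / 64))) = fI"
    unfolding fI_def by (rule ext) simp
  have g: "Gamma (2*\<nu>+1) \<noteq> 0"
  proof -
    have "2*\<nu>+1 \<notin> \<int>\<^sub>\<le>\<^sub>0" by (rule Re_pos_not_nonpos_Int) (use nu in simp)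
    then show ?thesis by (simp add: Gamma_eq_zero_iff)
  qed
  have F0: "complex_of_real 4 powr \<nu> \<noteq> 0" by (simp add: powr_def)
  define U where "U = complex_of_real uu powr \<nu>"
  define V where "V = complex_of_real vv powr \<nu>"
  define F where "F = complex_of_real 4 powr \<nu>"
  have K: "K0c = 2 * F / (of_real pi * Gamma (2*\<nu>+1))" unfolding K0c_def F_def ..
  have lhs: "besselJ \<nu> (of_real (a * x)) * besselJ \<nu> (of_real (b * x)) = U * V * TT"
    unfolding ia ib besselJ_al[OF uu_pos] besselJ_al[OF vv_pos] TT_LHS U_def V_def by (simp add: mult_ac)
  have "2 / (of_real pi * Gamma (2 * \<nu> + 1)) * (of_real (a * b * x^2)) powr \<nu> * integral {0..1} fI
        = 2 / (of_real pi * Gamma (2 * \<nu> + 1)) * (F * (U * V)) * (TT / (2 * F / (of_real pi * Gamma (2*\<nu>+1))))"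
    unfolding fI_integral powr_abx K U_def V_def F_def ..
  also have "\<dots> = U * V * TT"
    using g F0 unfolding F_def[symmetric] by (simp add: field_simps)
  finally show ?thesis unfolding fI_eq lhs by simp
qed

end


theorem mainTheorem13:
  fixes \<nu> :: complex and a b x :: real
  assumes "Re \<nu> > -1/2" and "a > 0" and "b > 0" and "x > 0"
  shows "besselJ \<nu> (of_real (a * x)) * besselJ \<nu> (of_real (b * x)) =
    2 / (of_real pi * Gamma (2 * \<nu> + 1)) * (of_real (a * b * x^2)) powr \<nu> *
    integral {0..1} (\<lambda>t::real.
       (of_real (1 - t^2)) powr (\<nu> - 1/2) * of_real (cos (x * t * sqrt (a^2 + b^2))) *
       hyp0F3 (\<nu> + 1) (\<nu> / 2 + 1/4) (\<nu> / 2 + 3/4)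
              (of_real (a^2 * b^2 * x^4 * (1 - t^2)^2 / 64)))"
    using main_ctx[OF assms] .

end
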